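(* For every $\boldsymbol{\phi}\in L^\infty(\Omega)^K$ and every $\lambda>0$, the functional $\mathcal{R}_{\boldsymbol{\phi},\lambda}$ admits at least one global minimizer in $\mathrm{BV}(\Omega)^K$ (and hence, for any minimizer $\boldsymbol{u}^\lambda$ and any $(\boldsymbol{a}^\lambda,\boldsymbol{b}^\lambda)$ minimizing $\mathcal{D}_{\boldsymbol{\phi}}(\boldsymbol{u}^\lambda,\cdot,\cdot)$, the triple $(\boldsymbol{u}^\lambda,\boldsymbol{a}^\lambda,\boldsymbol{b}^\lambda)$ is a global minimizer of $\mathcal{E}_{\boldsymbol{\phi};\lambda}$).
   Context: $\Omega\subseteq\mathbb{R}^2$ is a bounded domain with Lipschitz boundary, $K\ge1$. $\mathrm{BV}(\Omega)$ is the space of $L^1$ functions of bounded total variation $|u|_{\mathrm{TV}}$. $\mathbb A=\{\boldsymbol{u}\in\mathrm{BV}(\Omega)^K \mid u_k\ge 0\ \forall k,\ \sum_{k=1}^K u_k\le 1\}$, $i_{\mathbb A}$ its indicator function ($0$ on $\mathbb A$, $+\infty$ outside), $\mathcal{Q}(\boldsymbol{u})=\sum_{k=1}^K|u_k|_{\mathrm{TV}}$. For $\boldsymbol{\phi}=(\phi_k)\in L^\infty(\Omega)^K$, $\boldsymbol{a},\boldsymbol{b}\in\mathbb{R}^K$: $\mathcal{D}_{\boldsymbol{\phi}}(\boldsymbol{u},\boldsymbol{a},\boldsymbol{b})=\sum_{k=1}^K\int_\Omega (a_k-\phi_k)^2u_k+(b_k-\phi_k)^2(1-u_k)$, $\mathcal{E}_{\boldsymbol{\phi};\lambda}(\boldsymbol{u},\boldsymbol{a},\boldsymbol{b})=i_{\mathbb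 A}(\boldsymbol{u})+\lambda\mathcal{Q}(\boldsymbol{u})+\mathcal{D}_{\boldsymbol{\phi}}(\boldsymbol{u},\boldsymbol{a},\boldsymbol{b})$, and $\mathcal{R}_{\boldsymbol{\phi},\lambda}(\boldsymbol{u})=\lambda\mathcal{Q}(\boldsymbol{u})+\inf_{(\boldsymbol{a},\boldsymbol{b})\in\mathbb{R}^{2K}}\mathcal{D}_{\boldsymbol{\phi}}(\boldsymbol{u},\boldsymbol{a},\boldsymbol{b})$ if $\boldsymbol{u}\in\mathbb A$ and $+\infty$ otherwise. *)

theory Defs
  imports "HOL-Analysis.Analysis"
begin

type_synonym R2 = "real^2"

definition bounded_domain :: "R2 set \<Rightarrow> bool" where
  "bounded_domain \<Omega> \<longleftrightarrow> open \<Omega> \<and> connected \<Omega> \<and> bounded \<Omega> \<and> \<Omega> \<noteq> {}"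

text \<open>Locally, after a rigid motion, the domain is the subgraph of a Lipschitz function.\<close>
definition lipschitz_boundary :: "R2 set \<Rightarrow> bool" where
  "lipschitz_boundary \<Omega> \<longleftrightarrow>
     (\<forall>p\<in>frontier \<Omega>. \<exists>r>0. \<exists>T::R2 \<Rightarrow> R2. orthogonal_transformation T \<and>
        (\<exists>(\<gamma>::real \<Rightarrow> real) L. (\<forall>s t. \<bar>\<gamma> s - \<gamma> t\<bar> \<le> L * \<bar>s - t\<bar>) \<and>
           \<Omega> \<inter> ball p r = {y \<in> ball p r. (T (y - p)) $ 2 < \<gamma> ((T (y - p)) $ 1)}))"

definition test_fields :: "R2 set \<Rightarrow> (R2 \<Rightarrow> R2) set" where
  "test_fields \<Omega> = {g. (\<forall>x. g differentiable (at x)) \<and>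
      (\<forall>i\<in>Basis. continuous_on UNIV (\<lambda>x. frechet_derivative g (at x) i)) \<and>
      compact (closure {x. g x \<noteq> 0}) \<and> closure {x. g x \<noteq> 0} \<subseteq> \<Omega> \<and>
      (\<forall>x. norm (g x) \<le> 1)}"

definition divergence :: "(R2 \<Rightarrow> R2) \<Rightarrow> R2 \<Rightarrow> real" where
  "divergence g x = (\<Sum>i\<in>Basis. frechet_derivative g (at x) i \<bullet> i)"

definition TV :: "R2 set \<Rightarrow> (R2 \<Rightarrow> real) \<Rightarrow> ereal" where
  "TV \<Omega> u = (SUP g\<in>test_fields \<Omega>. ereal (LINT x:\<Omega>|lebesgue. u x * divergence g x))"

definition BV :: "R2 set \<Rightarrow> (R2 \<Rightarrow> real) set" where
  "BV \<Omega> = {u. set_integrable lebesgue \<Omega> u \<and> TV \<Omega> u < \<infinity>}"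

definition Linfty :: "R2 set \<Rightarrow> (R2 \<Rightarrow> real) set" where
  "Linfty \<Omega> = {f. set_borel_measurable lebesgue \<Omega> f \<and>
                   (\<exists>C. AE x in lebesgue. x \<in> \<Omega> \<longrightarrow> \<bar>f x\<bar> \<le> C)}"

text \<open>Vector fields u = (u_0,...,u_{K-1}) are functions nat => R2 => real; only k < K matter.\<close>
definition admissible :: "R2 set \<Rightarrow> nat \<Rightarrow> (nat \<Rightarrow> R2 \<Rightarrow> real) set" where
  "admissible \<Omega> K = {u. (\<forall>k<K. u k \<in> BV \<Omega>) \<and>
      (AE x in lebesgue. x \<in> \<Omega> \<longrightarrow> (\<forall>k<K. u k x \<ge> 0) \<and> (\<Sum>k<K. u k x) \<le> 1)}"

definition Qf :: "R2 set \<Rightarrow> nat \<Rightarrow> (nat \<Rightarrow> R2 \<Rightarrow> real) \<Rightarrow> ereal" where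
  "Qf \<Omega> K u = (\<Sum>k<K. TV \<Omega> (u k))"

definition Df :: "R2 set \<Rightarrow> nat \<Rightarrow> (nat \<Rightarrow> R2 \<Rightarrow> real) \<Rightarrow> (nat \<Rightarrow> R2 \<Rightarrow> real)
                   \<Rightarrow> (nat \<Rightarrow> real) \<Rightarrow> (nat \<Rightarrow> real) \<Rightarrow> real" where
  "Df \<Omega> K \<phi> u a b = (\<Sum>k<K. LINT x:\<Omega>|lebesgue.
        (a k - \<phi> k x)^2 * u k x + (b k - \<phi> k x)^2 * (1 - u k x))"

definition Ef :: "R2 set \<Rightarrow> nat \<Rightarrow> (nat \<Rightarrow> R2 \<Rightarrow> real) \<Rightarrow> real
                   \<Rightarrow> (nat \<Rightarrow> R2 \<Rightarrow> real) \<Rightarrow> (nat \<Rightarrow> real) \<Rightarrow> (nat \<Rightarrow> real) \<Rightarrow> ereal" where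
  "Ef \<Omega> K \<phi> lam u a b =
     (if u \<in> admissible \<Omega> K then ereal lam * Qf \<Omega> K u + ereal (Df \<Omega> K \<phi> u a b) else \<infinity>)"

definition Rf :: "R2 set \<Rightarrow> nat \<Rightarrow> (nat \<Rightarrow> R2 \<Rightarrow> real) \<Rightarrow> real
                   \<Rightarrow> (nat \<Rightarrow> R2 \<Rightarrow> real) \<Rightarrow> ereal" where
  "Rf \<Omega> K \<phi> lam u =
     (if u \<in> admissible \<Omega> K
      then ereal lam * Qf \<Omega> K u + ereal (Inf {Df \<Omega> K \<phi> u a b | a b. True})
      else \<infinity>)"

end

theory Submission
  imports Defs "HOL-Library.Diagonal_Subsequence"
begin


lemma diag_subseq:
  fixes X :: "nat \<Rightarrow> nat \<Rightarrow> real"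
  assumes bdd: "\<And>i. \<exists>B. \<forall>n. \<bar>X i n\<bar> \<le> B"
  shows "\<exists>d. strict_mono d \<and> (\<forall>i. convergent (\<lambda>n. X i (d n)))"
proof -
  let ?P = "\<lambda>i. \<lambda>s. convergent (\<lambda>k. X i (s k))"
  interpret nat: subseqs ?P
  proof (unfold convergent_def, unfold subseqs_def, auto)
    fix n :: nat and s :: "nat \<Rightarrow> nat" assume s: "strict_mono s"
    obtain M where M: "\<forall>k. \<bar>X n k\<bar> \<le> M" using bdd by blast
    have "bounded {-M..M}"
      using bounded_closed_interval by auto
    moreover have "\<And>k. X n (s k) \<in> {-M..M}"
      using M by (simp add: abs_le_iff minus_le_iff)
    ultimately have "\<exists>l s'. strict_mono s' \<and> ((\<lambda>k. X n (s k)) \<circ> s') \<longlonglongrightarrow> l"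
      using compact_Icc compact_imp_seq_compact seq_compactE by metis
    thus "\<exists>s'. strict_mono (s'::nat\<Rightarrow>nat) \<and> (\<exists>l. (\<lambda>k. X n (s (s' k))) \<longlonglongrightarrow> l)"
      by (auto simp: comp_def)
  qed
  define d where "d = nat.diagseq"
  have subseq: "strict_mono d"
    unfolding d_def using nat.subseq_diagseq by auto
  have rat_cnv: "?P n d" for n
  proof -
    have Pn_seqseq: "?P n (nat.seqseq (Suc n))"
      by (rule nat.seqseq_holds)
    have 1: "(\<lambda>k. X n ((nat.seqseq (Suc n) \<circ> (\<lambda>k. nat.fold_reduce (Suc n) k
      (Suc n + k))) k)) = (\<lambda>k. X n (nat.seqseq (Suc n) k)) \<circ>
      (\<lambda>k. nat.fold_reduce (Suc n) k (Suc n + k))"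
      by auto
    have 2: "?P n (d \<circ> ((+) (Suc n)))"
      unfolding d_def nat.diagseq_seqseq 1
      by (intro convergent_subseq_convergent Pn_seqseq nat.subseq_diagonal_rest)
    then obtain L where 3: "(\<lambda>na. X n (d (na + Suc n))) \<longlonglongrightarrow> L"
      by (auto simp: add.commute dest: convergentD)
    then have "(\<lambda>k. X n (d k)) \<longlonglongrightarrow> L"
      by (rule LIMSEQ_offset)
    then show ?thesis
      by (auto simp: convergent_def)
  qed
  show ?thesis using subseq rat_cnv by blast
qed



lemma Linfty_int:
  assumes "\<Omega> \<in> lmeasurable" "f \<in> Linfty \<Omega>"
  shows "set_integrable lebesgue \<Omega> f"
proof -
  from assms(2) obtain C where m: "set_borel_measurable lebesgue \<Omega> f"
    and C: "AE x in lebesgue. x \<in> \<Omega> \<longrightarrow> \<bar>f x\<bar> \<le> C" unfolding Linfty_def by blast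
  show ?thesis unfolding set_integrable_def
    apply (rule integrableI_bounded_set[where A=\<Omega> and B=C])
    using assms(1) m C by (auto simp: set_borel_measurable_def fmeasurable_def)
qed

lemma Linfty_const: "\<Omega> \<in> sets lebesgue \<Longrightarrow> (\<lambda>x. c) \<in> Linfty \<Omega>"
  unfolding Linfty_def set_borel_measurable_def
  by (auto intro!: exI[of _ "\<bar>c\<bar>"] borel_measurable_indicator)

lemma Linfty_ind: "\<Omega> \<in> sets lebesgue \<Longrightarrow> A \<in> sets lebesgue \<Longrightarrow> indicator A \<in> Linfty \<Omega>"
  unfolding Linfty_def set_borel_measurable_def
  by (auto intro!: exI[of _ 1] borel_measurable_indicator borel_measurable_times simp: indicator_def)

lemma Linfty_add: assumes "f \<in> Linfty \<Omega>" "g \<in> Linfty \<Omega>" shows "(\<lambda>x. f x + g x) \<in> Linfty \<Omega>"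
proof -
  from assms obtain C D where m: "set_borel_measurable lebesgue \<Omega> f" "set_borel_measurable lebesgue \<Omega> g"
    and C: "AE x in lebesgue. x \<in> \<Omega> \<longrightarrow> \<bar>f x\<bar> \<le> C" and D: "AE x in lebesgue. x \<in> \<Omega> \<longrightarrow> \<bar>g x\<bar> \<le> D"
    unfolding Linfty_def by blast
  have "(\<lambda>x. indicator \<Omega> x *\<^sub>R (f x + g x)) = (\<lambda>x. indicator \<Omega> x *\<^sub>R f x + indicator \<Omega> x *\<^sub>R g x)"
    by (auto simp: algebra_simps)
  then have "set_borel_measurable lebesgue \<Omega> (\<lambda>x. f x + g x)" using m
    unfolding set_borel_measurable_def by simp
  moreover have "AE x in lebesgue. x \<in> \<Omega> \<longrightarrow> \<bar>f x + g x\<bar> \<le> C + D" using C D by eventually_elim auto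
  ultimately show ?thesis unfolding Linfty_def by blast
qed

lemma Linfty_mult: assumes "f \<in> Linfty \<Omega>" "g \<in> Linfty \<Omega>" shows "(\<lambda>x. f x * g x) \<in> Linfty \<Omega>"
proof -
  from assms obtain C D where m: "set_borel_measurable lebesgue \<Omega> f" "set_borel_measurable lebesgue \<Omega> g"
    and C: "AE x in lebesgue. x \<in> \<Omega> \<longrightarrow> \<bar>f x\<bar> \<le> C" and D: "AE x in lebesgue. x \<in> \<Omega> \<longrightarrow> \<bar>g x\<bar> \<le> D"
    unfolding Linfty_def by blast
  have "(\<lambda>x. indicator \<Omega> x *\<^sub>R (f x * g x)) = (\<lambda>x. (indicator \<Omega> x *\<^sub>R f x) * (indicator \<Omega> x *\<^sub>R g x))"
    by (auto simp: indicator_def)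
  then have "set_borel_measurable lebesgue \<Omega> (\<lambda>x. f x * g x)" using m
    unfolding set_borel_measurable_def by simp
  moreover have "AE x in lebesgue. x \<in> \<Omega> \<longrightarrow> \<bar>f x * g x\<bar> \<le> C * D" using C D
    by eventually_elim (auto simp: abs_mult intro: mult_mono)
  ultimately show ?thesis unfolding Linfty_def by blast
qed

lemma Linfty_minus: assumes "f \<in> Linfty \<Omega>" shows "(\<lambda>x. - f x) \<in> Linfty \<Omega>"
proof -
  from assms obtain C where m: "set_borel_measurable lebesgue \<Omega> f"
    and C: "AE x in lebesgue. x \<in> \<Omega> \<longrightarrow> \<bar>f x\<bar> \<le> C"
    unfolding Linfty_def by blast
  have "(\<lambda>x. indicator \<Omega> x *\<^sub>R (- f x)) = (\<lambda>x. - (indicator \<Omega> x *\<^sub>R f x))"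
    by (auto simp: indicator_def)
  then have "set_borel_measurable lebesgue \<Omega> (\<lambda>x. - f x)" using m
    unfolding set_borel_measurable_def by simp
  then show ?thesis using C unfolding Linfty_def by auto
qed

lemma Linfty_diff: "f \<in> Linfty \<Omega> \<Longrightarrow> g \<in> Linfty \<Omega> \<Longrightarrow> (\<lambda>x. f x - g x) \<in> Linfty \<Omega>"
  using Linfty_add[OF _ Linfty_minus, of f \<Omega> g] by simp

lemma Linfty_sum: "\<Omega> \<in> sets lebesgue \<Longrightarrow> (\<And>i. i \<in> I \<Longrightarrow> f i \<in> Linfty \<Omega>) \<Longrightarrow> (\<lambda>x. \<Sum>i\<in>I. f i x) \<in> Linfty \<Omega>"
  by (induct I rule: infinite_finite_induct) (auto intro: Linfty_add Linfty_const)

lemma Linfty_cong: "f \<in> Linfty \<Omega> \<Longrightarrow> (\<And>x. x \<in> \<Omega> \<Longrightarrow> f x = g x) \<Longrightarrow> g \<in> Linfty \<Omega>"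
proof -
  assume f: "f \<in> Linfty \<Omega>" and e: "\<And>x. x \<in> \<Omega> \<Longrightarrow> f x = g x"
  have "(\<lambda>x. indicator \<Omega> x *\<^sub>R f x) = (\<lambda>x. indicator \<Omega> x *\<^sub>R g x)" using e by (auto simp: indicator_def)
  moreover obtain C where "AE x in lebesgue. x \<in> \<Omega> \<longrightarrow> \<bar>f x\<bar> \<le> C" using f unfolding Linfty_def by blast
  then have "AE x in lebesgue. x \<in> \<Omega> \<longrightarrow> \<bar>g x\<bar> \<le> C" by eventually_elim (use e in auto)
  ultimately show ?thesis using f unfolding Linfty_def set_borel_measurable_def by auto
qed

lemma Linfty_bound: "f \<in> Linfty \<Omega> \<Longrightarrow> \<exists>C. AE x in lebesgue. x \<in> \<Omega> \<longrightarrow> \<bar>f x\<bar> \<le> C"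
  unfolding Linfty_def by blast



lemma set_int_diff_bound:
  assumes \<Omega>: "\<Omega> \<in> lmeasurable" and w: "w \<in> Linfty \<Omega>" and b: "AE x in lebesgue. x \<in> \<Omega> \<longrightarrow> \<bar>w x\<bar> \<le> 1"
    and S: "S \<in> sets lebesgue" and T: "T \<in> sets lebesgue"
  shows "\<bar>(LINT x:S\<inter>\<Omega>|lebesgue. w x) - (LINT x:T\<inter>\<Omega>|lebesgue. w x)\<bar> \<le> measure lebesgue (((S - T) \<union> (T - S)) \<inter> \<Omega>)"
proof -
  have wi: "integrable lebesgue (\<lambda>x. indicator \<Omega> x * w x)"
    using Linfty_int[OF \<Omega> w] by (simp add: set_integrable_def)
  have \<Omega>s: "\<Omega> \<in> sets lebesgue" using \<Omega> by (simp add: fmeasurable_def)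
  have iS: "integrable lebesgue (\<lambda>x. indicator S x * (indicator \<Omega> x * w x))"
    using integrable_real_mult_indicator[OF S wi] by (simp add: mult_ac)
  have iT: "integrable lebesgue (\<lambda>x. indicator T x * (indicator \<Omega> x * w x))"
    using integrable_real_mult_indicator[OF T wi] by (simp add: mult_ac)
  let ?D = "((S - T) \<union> (T - S)) \<inter> \<Omega>"
  have Dm: "?D \<in> lmeasurable"
  proof -
    have "(S - T) \<union> (T - S) \<in> sets lebesgue" using S T by auto
    then show ?thesis using \<Omega> by (metis fmeasurable_Int_fmeasurable inf_commute)
  qed
  have "(LINT x:S\<inter>\<Omega>|lebesgue. w x) - (LINT x:T\<inter>\<Omega>|lebesgue. w x)
      = integral\<^sup>L lebesgue (\<lambda>x. indicator S x * (indicator \<Omega> x * w x) - indicator T x * (indicator \<Omega> x * w x))"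
    unfolding set_lebesgue_integral_def
    by (subst Bochner_Integration.integral_diff[OF iS iT]) (simp add: indicator_inter_arith mult_ac)
  also have "\<bar>\<dots>\<bar> \<le> integral\<^sup>L lebesgue (\<lambda>x. norm (indicator S x * (indicator \<Omega> x * w x) - indicator T x * (indicator \<Omega> x * w x)))"
    using integral_norm_bound[of lebesgue "\<lambda>x. indicator S x * (indicator \<Omega> x * w x) - indicator T x * (indicator \<Omega> x * w x)"] by (simp only: real_norm_def)
  also have "\<dots> \<le> integral\<^sup>L lebesgue (indicator ?D)"
  proof (rule integral_mono_AE)
    show "integrable lebesgue (\<lambda>x. norm (indicator S x * (indicator \<Omega> x * w x) - indicator T x * (indicator \<Omega> x * w x)))"
      using iS iT by auto
    show "integrable lebesgue (indicator ?D :: _ \<Rightarrow> real)"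
      using Dm by (intro integrable_real_indicator) (auto simp: fmeasurable_def)
    show "AE x in lebesgue. norm (indicator S x * (indicator \<Omega> x * w x) - indicator T x * (indicator \<Omega> x * w x)) \<le> indicator ?D x"
    proof (rule AE_mp[OF b], rule AE_I2, rule impI)
      fix x assume h: "x \<in> \<Omega> \<longrightarrow> \<bar>w x\<bar> \<le> 1"
      show "norm (indicator S x * (indicator \<Omega> x * w x) - indicator T x * (indicator \<Omega> x * w x)) \<le> indicator ?D x"
        by (cases "x \<in> S"; cases "x \<in> T"; cases "x \<in> \<Omega>") (use h in simp_all)
    qed
  qed
  also have "\<dots> = measure lebesgue ?D" by simp
  finally show ?thesis .
qed

definition Bfam :: "R2 set set \<Rightarrow> R2 set set" where
  "Bfam Bs = (\<lambda>F. \<Union>F) ` {F. finite F \<and> F \<subseteq> Bs}"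

lemma approx_Bfam:
  assumes Bs: "topological_basis Bs" "countable Bs" and S: "S \<in> lmeasurable" and e: "e > 0"
  shows "\<exists>B\<in>Bfam Bs. B \<in> lmeasurable \<and> measure lebesgue ((S - B) \<union> (B - S)) < e"
proof -
  have e2: "e/2 > 0" using e by simp
  obtain T where T: "open T" "S \<subseteq> T" "(T - S) \<in> lmeasurable" "emeasure lebesgue (T - S) < ennreal (e/2)"
    using sets_lebesgue_outer_open[of S "e/2"] S e2 by (auto simp: fmeasurable_def)
  have Tm: "T \<in> lmeasurable"
  proof -
    have "T = S \<union> (T - S)" using T by auto
    then show ?thesis using S T(3) by (metis fmeasurable.Un)
  qed
  have mTS: "measure lebesgue (T - S) < e/2"
    using T(3,4) e by (simp add: emeasure_eq_measure2 ennreal_less_iff)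
  obtain B' where B': "B' \<subseteq> Bs" "\<Union>B' = T"
    using Bs T(1) unfolding topological_basis_def by blast
  have Bopen: "\<And>b. b \<in> B' \<Longrightarrow> open b" using Bs B' unfolding topological_basis_def by blast
  show ?thesis
  proof (cases "B' = {}")
    case True
    then have "T = {}" using B' by auto
    then have "S = {}" using T by auto
    moreover have "{} \<in> Bfam Bs" unfolding Bfam_def by (auto intro!: image_eqI[of _ _ "{}"])
    ultimately show ?thesis using e by auto
  next
    case False
    have cB': "countable B'" using B' Bs(2) countable_subset by blast
    define f where "f = from_nat_into B'"
    have rf: "range f = B'" using False cB' unfolding f_def by (simp add: range_from_nat_into)
    define A where "A i = \<Union>(f ` {..<i})" for i
    have Asub: "A i \<subseteq> T" for i using rf B' unfolding A_def by auto
    have Aopen: "open (A i)" for i unfolding A_def using rf Bopen by (intro open_Union) auto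
    have Am: "A i \<in> lmeasurable" for i
    proof -
    have "A i \<in> sets lebesgue" using Aopen by (simp add: borel_open)
    then show ?thesis using Asub Tm by (meson fmeasurableI2)
  qed
    have inc: "incseq A" unfolding A_def incseq_def by auto (meson lessThan_iff order_less_le_trans)
    have UA: "(\<Union>i. A i) = T"
    proof
      show "(\<Union>i. A i) \<subseteq> T" using Asub by auto
      show "T \<subseteq> (\<Union>i. A i)"
      proof
        fix x assume "x \<in> T"
        then obtain i where "x \<in> f i" using B' rf by auto
        then show "x \<in> (\<Union>i. A i)" unfolding A_def by (auto intro!: exI[of _ "Suc i"])
      qed
    qed
    have "(\<lambda>i. measure lebesgue (A i)) \<longlonglongrightarrow> measure lebesgue T"
    proof -
      have "range A \<subseteq> sets lebesgue" using Am by (auto simp: fmeasurable_def)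
      moreover have "emeasure lebesgue (\<Union>i. A i) \<noteq> \<infinity>" unfolding UA using fmeasurableD2[OF Tm] by (metis infinity_ennreal_def)
      ultimately show ?thesis using Lim_measure_incseq[of A lebesgue] inc UA by simp
    qed
    then obtain i where i: "\<bar>measure lebesgue (A i) - measure lebesgue T\<bar> < e/2"
      using e2 unfolding LIMSEQ_iff real_norm_def by blast
    have inB: "A i \<in> Bfam Bs" unfolding Bfam_def A_def using rf B' by auto
    have "(S - A i) \<union> (A i - S) \<subseteq> (T - S) \<union> (T - A i)" using T Asub by auto
    then have "measure lebesgue ((S - A i) \<union> (A i - S)) \<le> measure lebesgue ((T - S) \<union> (T - A i))"
      using Tm Am S T(3) by (intro measure_mono_fmeasurable) auto
    also have "\<dots> \<le> measure lebesgue (T - S) + measure lebesgue (T - A i)"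
      using Tm Am S T(3) by (intro measure_Un_le) auto
    also have "measure lebesgue (T - A i) = measure lebesgue T - measure lebesgue (A i)"
      using Tm Am Asub by (intro measure_Diff) (auto simp: fmeasurable_def)
    finally have "measure lebesgue ((S - A i) \<union> (A i - S)) < e" using mTS i by linarith
    then show ?thesis using inB Am by blast
  qed
qed



lemma sets_conv:
  assumes \<Omega>: "\<Omega> \<in> lmeasurable" and Bs: "topological_basis Bs" "countable Bs"
  and w: "\<And>n. w n \<in> Linfty \<Omega>" "\<And>n. AE x in lebesgue. x\<in>\<Omega> \<longrightarrow> \<bar>w n x\<bar> \<le> 1"
  and cB: "\<And>B. B \<in> Bfam Bs \<Longrightarrow> convergent (\<lambda>n. LINT x:B\<inter>\<Omega>|lebesgue. w n x)"
  and A: "A \<in> sets lebesgue"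
  shows "convergent (\<lambda>n. LINT x:A\<inter>\<Omega>|lebesgue. w n x)"
proof -
  have "Cauchy (\<lambda>n. LINT x:A\<inter>\<Omega>|lebesgue. w n x)"
  proof (rule metric_CauchyI)
    fix e :: real assume e: "e > 0"
    have S: "A \<inter> \<Omega> \<in> lmeasurable" using A \<Omega> by (metis fmeasurable_Int_fmeasurable inf_commute)
    obtain B where B: "B \<in> Bfam Bs" "B \<in> lmeasurable" "measure lebesgue ((A \<inter> \<Omega> - B) \<union> (B - A \<inter> \<Omega>)) < e/3"
      using approx_Bfam[OF Bs S, of "e/3"] e by auto
    have Bs': "B \<in> sets lebesgue" using B by (simp add: fmeasurable_def)
    have bd: "\<bar>(LINT x:A\<inter>\<Omega>|lebesgue. w n x) - (LINT x:B\<inter>\<Omega>|lebesgue. w n x)\<bar> < e/3" for n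
    proof -
      have "((A - B) \<union> (B - A)) \<inter> \<Omega> \<subseteq> (A \<inter> \<Omega> - B) \<union> (B - A \<inter> \<Omega>)" by auto
      moreover have "((A - B) \<union> (B - A)) \<inter> \<Omega> \<in> sets lebesgue" using A Bs' \<Omega> by (auto simp: fmeasurable_def)
      moreover have "(A \<inter> \<Omega> - B) \<union> (B - A \<inter> \<Omega>) \<in> lmeasurable" using S B(2) by auto
      ultimately have "measure lebesgue (((A - B) \<union> (B - A)) \<inter> \<Omega>) \<le> measure lebesgue ((A \<inter> \<Omega> - B) \<union> (B - A \<inter> \<Omega>))"
        by (intro measure_mono_fmeasurable) auto
      then show ?thesis using set_int_diff_bound[OF \<Omega> w(1) w(2) A Bs', of n] B(3) by linarith
    qed
    have "Cauchy (\<lambda>n. LINT x:B\<inter>\<Omega>|lebesgue. w n x)" using cB[OF B(1)] by (rule convergent_Cauchy)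
    then obtain M where M: "\<forall>m\<ge>M. \<forall>n\<ge>M. dist (LINT x:B\<inter>\<Omega>|lebesgue. w m x) (LINT x:B\<inter>\<Omega>|lebesgue. w n x) < e/3"
      using e unfolding Cauchy_def by (meson divide_pos_pos zero_less_numeral)
    show "\<exists>M. \<forall>m\<ge>M. \<forall>n\<ge>M. dist (LINT x:A\<inter>\<Omega>|lebesgue. w m x) (LINT x:A\<inter>\<Omega>|lebesgue. w n x) < e"
    proof (intro exI allI impI)
      fix m n assume "M \<le> m" "M \<le> n"
      then have "dist (LINT x:B\<inter>\<Omega>|lebesgue. w m x) (LINT x:B\<inter>\<Omega>|lebesgue. w n x) < e/3" using M by blast
      then show "dist (LINT x:A\<inter>\<Omega>|lebesgue. w m x) (LINT x:A\<inter>\<Omega>|lebesgue. w n x) < e"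
        using bd[of m] bd[of n] unfolding dist_real_def by linarith
    qed
  qed
  then show ?thesis by (simp add: Cauchy_convergent_iff)
qed



lemma sigma_finite_lebesgue_R2: "sigma_finite_measure (lebesgue :: R2 measure)"
proof
  let ?A = "range (\<lambda>n::nat. ball (0::R2) (real n))"
  have 1: "countable ?A" by simp
  have 2: "?A \<subseteq> sets lebesgue" by (auto simp: borel_open)
  have 3: "\<Union>?A = space lebesgue"
    by (auto simp: dist_norm) (meson reals_Archimedean2)
  have 4: "\<forall>a\<in>?A. emeasure lebesgue a \<noteq> \<infinity>"
    using fmeasurableD2[OF lmeasurable_ball] by (auto simp: infinity_ennreal_def)
  show "\<exists>A::R2 set set. countable A \<and> A \<subseteq> sets lebesgue \<and> \<Union>A = space lebesgue \<and> (\<forall>a\<in>A. emeasure lebesgue a \<noteq> \<infinity>)"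
    using 1 2 3 4 by blast
qed

lemma ae_nonneg_from_sets:
  fixes u :: "R2 \<Rightarrow> real"
  assumes \<Omega>: "\<Omega> \<in> lmeasurable" and u: "set_integrable lebesgue \<Omega> u"
    and pos: "\<And>A. A \<in> sets lebesgue \<Longrightarrow> 0 \<le> (LINT x:A\<inter>\<Omega>|lebesgue. u x)"
  shows "AE x in lebesgue. x \<in> \<Omega> \<longrightarrow> 0 \<le> u x"
proof -
  let ?g = "\<lambda>x. indicator \<Omega> x * u x"
  have gi: "integrable lebesgue ?g" using u by (simp add: set_integrable_def)
  then have gm[measurable]: "?g \<in> borel_measurable lebesgue" by auto
  define A where "A = {x. ?g x < 0}"
  have Am: "A \<in> sets lebesgue"
  proof -
    have "?g -` {..<0} \<inter> space lebesgue \<in> sets lebesgue" by (rule measurable_sets[OF gm]) (simp add: borel_open)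
    moreover have "?g -` {..<0} \<inter> space lebesgue = A" unfolding A_def by auto
    ultimately show ?thesis by simp
  qed
  have "A \<inter> \<Omega> = A" unfolding A_def by (auto simp: indicator_def)
  have eqi: "(LINT x:A\<inter>\<Omega>|lebesgue. u x) = integral\<^sup>L lebesgue (\<lambda>x. indicator A x * ?g x)"
    unfolding set_lebesgue_integral_def by (intro Bochner_Integration.integral_cong) (auto simp: indicator_def)
  have i2: "integrable lebesgue (\<lambda>x. - (indicator A x * ?g x))"
    using integrable_real_mult_indicator[OF Am gi] by (simp add: mult_ac)
  have nn: "AE x in lebesgue. 0 \<le> - (indicator A x * ?g x)"
    by (rule AE_I2) (auto simp: A_def indicator_def)
  have "integral\<^sup>L lebesgue (\<lambda>x. - (indicator A x * ?g x)) = 0"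
  proof -
    have "integral\<^sup>L lebesgue (\<lambda>x. - (indicator A x * ?g x)) \<ge> 0" using nn by (rule integral_nonneg_AE)
    moreover have "integral\<^sup>L lebesgue (\<lambda>x. - (indicator A x * ?g x)) = - integral\<^sup>L lebesgue (\<lambda>x. indicator A x * ?g x)"
      by simp
    ultimately show ?thesis using pos[OF Am] eqi by linarith
  qed
  then have "AE x in lebesgue. - (indicator A x * ?g x) = 0"
    using integral_nonneg_eq_0_iff_AE[OF i2 nn] by simp
  then show ?thesis
    by eventually_elim (auto simp: A_def indicator_def split: if_splits)
qed



lemma limit_density:
  fixes w :: "nat \<Rightarrow> R2 \<Rightarrow> real"
  assumes \<Omega>: "\<Omega> \<in> lmeasurable"
  and w: "\<And>n. w n \<in> Linfty \<Omega>" "\<And>n. AE x in lebesgue. x\<in>\<Omega> \<longrightarrow> 0 \<le> w n x \<and> w n x \<le> 1"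
  and cA: "\<And>A. A \<in> sets lebesgue \<Longrightarrow> convergent (\<lambda>n. LINT x:A\<inter>\<Omega>|lebesgue. w n x)"
  shows "\<exists>u. u \<in> Linfty \<Omega> \<and> (AE x in lebesgue. x\<in>\<Omega> \<longrightarrow> 0 \<le> u x \<and> u x \<le> 1) \<and>
     (\<forall>A\<in>sets lebesgue. (\<lambda>n. LINT x:A\<inter>\<Omega>|lebesgue. w n x) \<longlonglongrightarrow> (LINT x:A\<inter>\<Omega>|lebesgue. u x))"
proof -
  have \<Omega>s: "\<Omega> \<in> sets lebesgue" using \<Omega> by (simp add: fmeasurable_def)
  define I where "I A n = (LINT x:A\<inter>\<Omega>|lebesgue. w n x)" for A n
  define \<nu> where "\<nu> A = lim (I A)" for A
  have lim: "I A \<longlonglongrightarrow> \<nu> A" if "A \<in> sets lebesgue" for A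
    using cA[OF that] unfolding I_def \<nu>_def by (simp add: convergent_LIMSEQ_iff)
  have Im: "A \<inter> \<Omega> \<in> lmeasurable" if "A \<in> sets lebesgue" for A
    using that \<Omega> by (metis fmeasurable_Int_fmeasurable inf_commute)
  have wi: "set_integrable lebesgue (A \<inter> \<Omega>) (w n)" if "A \<in> sets lebesgue" for A n
    using set_integrable_subset[OF Linfty_int[OF \<Omega> w(1)]] that \<Omega>s by auto
  have Ibd: "0 \<le> I A n \<and> I A n \<le> measure lebesgue (A \<inter> \<Omega>)" if A: "A \<in> sets lebesgue" for A n
  proof
    show "0 \<le> I A n" unfolding I_def set_lebesgue_integral_def
      by (rule integral_nonneg_AE) (use w(2)[of n] in \<open>eventually_elim, auto simp: indicator_def\<close>)
    have "I A n \<le> integral\<^sup>L lebesgue (indicator (A \<inter> \<Omega>))" unfolding I_def set_lebesgue_integral_def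
    proof (rule integral_mono_AE)
      show "integrable lebesgue (\<lambda>x. indicator (A \<inter> \<Omega>) x *\<^sub>R w n x)" using wi[OF A] by (simp add: set_integrable_def)
      show "integrable lebesgue (indicator (A \<inter> \<Omega>) :: _ \<Rightarrow> real)"
        using Im[OF A] by (intro integrable_real_indicator) (auto simp: fmeasurable_def)
      show "AE x in lebesgue. indicator (A \<inter> \<Omega>) x *\<^sub>R w n x \<le> indicator (A \<inter> \<Omega>) x"
        using w(2)[of n] by eventually_elim (auto simp: indicator_def)
    qed
    then show "I A n \<le> measure lebesgue (A \<inter> \<Omega>)" by simp
  qed
  have \<nu>bd: "0 \<le> \<nu> A \<and> \<nu> A \<le> measure lebesgue (A \<inter> \<Omega>)" if A: "A \<in> sets lebesgue" for A
    using LIMSEQ_le_const[OF lim[OF A], of 0] LIMSEQ_le_const2[OF lim[OF A], of "measure lebesgue (A \<inter> \<Omega>)"] Ibd[OF A]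
    by auto
  have \<nu>add: "\<nu> (A \<union> B) = \<nu> A + \<nu> B" if A: "A \<in> sets lebesgue" and B: "B \<in> sets lebesgue" and d: "A \<inter> B = {}" for A B
  proof -
    have e: "I (A \<union> B) n = I A n + I B n" for n
    proof -
      have "(A \<union> B) \<inter> \<Omega> = (A \<inter> \<Omega>) \<union> (B \<inter> \<Omega>)" by auto
      then show ?thesis unfolding I_def using set_integral_Un[of "A \<inter> \<Omega>" "B \<inter> \<Omega>" lebesgue "w n"] d wi[OF A] wi[OF B]
        by auto
    qed
    have "I (A \<union> B) = (\<lambda>n. I A n + I B n)" using e by (rule ext)
    then have "I (A \<union> B) \<longlonglongrightarrow> \<nu> A + \<nu> B" using tendsto_add[OF lim[OF A] lim[OF B]] by simp
    then show ?thesis using lim[of "A \<union> B"] A B LIMSEQ_unique by blast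
  qed
  have \<nu>0: "\<nu> {} = 0" using \<nu>bd[of "{}"] by simp
  define \<mu> where "\<mu> A = ennreal (\<nu> A)" for A
  have ca: "countably_additive (sets lebesgue) \<mu>"
  proof (rule sets.empty_continuous_imp_countably_additive)
    show "positive (sets lebesgue) \<mu>" unfolding positive_def \<mu>_def using \<nu>0 by simp
    show "additive (sets lebesgue) \<mu>" unfolding additive_def \<mu>_def
    proof (intro ballI impI)
      fix x y :: "R2 set" assume "x \<in> sets lebesgue" "y \<in> sets lebesgue" "x \<inter> y = {}"
      then show "ennreal (\<nu> (x \<union> y)) = ennreal (\<nu> x) + ennreal (\<nu> y)"
        using \<nu>add[of x y] \<nu>bd[of x] \<nu>bd[of y] by (simp add: ennreal_plus)
    qed
    show "\<forall>A\<in>sets lebesgue. \<mu> A \<noteq> \<infinity>" unfolding \<mu>_def by simp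
    fix A :: "nat \<Rightarrow> R2 set" assume A: "range A \<subseteq> sets lebesgue" "decseq A" "(\<Inter>i. A i) = {}"
    have "(\<lambda>i. measure lebesgue (A i \<inter> \<Omega>)) \<longlonglongrightarrow> measure lebesgue (\<Inter>i. A i \<inter> \<Omega>)"
    proof (rule Lim_measure_decseq)
      show "range (\<lambda>i. A i \<inter> \<Omega>) \<subseteq> sets lebesgue" using A(1) \<Omega>s by auto
      show "decseq (\<lambda>i. A i \<inter> \<Omega>)" using A(2) unfolding decseq_def by auto
      show "emeasure lebesgue (A i \<inter> \<Omega>) \<noteq> \<infinity>" for i using fmeasurableD2[OF Im[of "A i"]] A(1)
        by (auto simp: infinity_ennreal_def)
    qed
    moreover have "(\<Inter>i. A i \<inter> \<Omega>) = {}" using A(3) by auto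
    ultimately have m0: "(\<lambda>i. measure lebesgue (A i \<inter> \<Omega>)) \<longlonglongrightarrow> 0" by simp
    have Ai: "A i \<in> sets lebesgue" for i using A(1) by auto
    have "(\<lambda>i. \<nu> (A i)) \<longlonglongrightarrow> 0"
    proof (rule real_tendsto_sandwich[OF _ _ tendsto_const m0])
      show "\<forall>\<^sub>F n in sequentially. 0 \<le> \<nu> (A n)" using \<nu>bd[OF Ai] by (intro always_eventually) blast
      show "\<forall>\<^sub>F n in sequentially. \<nu> (A n) \<le> measure lebesgue (A n \<inter> \<Omega>)" using \<nu>bd[OF Ai] by (intro always_eventually) blast
    qed
    from tendsto_ennrealI[OF this] show "(\<lambda>i. \<mu> (A i)) \<longlonglongrightarrow> 0" unfolding \<mu>_def by simp
  qed
  define N where "N = measure_of (space lebesgue) (sets lebesgue) \<mu>"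
  have sN: "sets N = sets lebesgue" unfolding N_def using sets.sigma_sets_eq[of lebesgue] by simp
  have eN: "emeasure N A = \<mu> A" if "A \<in> sets lebesgue" for A
    unfolding N_def
    by (rule emeasure_measure_of_sigma[OF sets.sigma_algebra_axioms _ ca that])
       (simp add: positive_def \<mu>_def \<nu>0)
  have ac: "absolutely_continuous lebesgue N"
    unfolding absolutely_continuous_def
  proof
    fix A :: "R2 set" assume A: "A \<in> null_sets lebesgue"
    then have As: "A \<in> sets lebesgue" by auto
    have "measure lebesgue (A \<inter> \<Omega>) = 0"
    proof -
      have "A \<inter> \<Omega> \<in> null_sets lebesgue" using A \<Omega>s by (auto intro: null_set_Int1 null_set_Int2)
      then show ?thesis by (rule measure_eq_0_null_sets)
    qed
    then have "\<nu> A = 0" using \<nu>bd[OF As] by simp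
    then show "A \<in> null_sets N" using eN[OF As] As sN by (auto simp: \<mu>_def null_sets_def)
  qed
  obtain f where f: "f \<in> borel_measurable lebesgue" "density lebesgue f = N"
    using sigma_finite_measure.Radon_Nikodym[OF sigma_finite_lebesgue_R2 ac sN] by blast
  have fA: "(\<integral>\<^sup>+x. f x * indicator A x \<partial>lebesgue) = ennreal (\<nu> A)" if A: "A \<in> sets lebesgue" for A
    using emeasure_density[OF f(1) A] f(2) eN[OF A] by (simp add: \<mu>_def)
  have ffin: "AE x in lebesgue. x \<in> \<Omega> \<longrightarrow> f x \<noteq> \<infinity>"
  proof -
    have "AE x in lebesgue. f x * indicator \<Omega> x \<noteq> \<infinity>"
      by (rule nn_integral_PInf_AE) (use f(1) fA[OF \<Omega>s] \<Omega>s in auto)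
    then show ?thesis by eventually_elim (auto simp: indicator_def)
  qed
  define u where "u x = enn2real (f x) * indicator \<Omega> x" for x
  have um: "u \<in> borel_measurable lebesgue" unfolding u_def using f(1) \<Omega>s by measurable
  have key: "integrable lebesgue (\<lambda>x. indicator (A \<inter> \<Omega>) x * u x) \<and> (LINT x:A\<inter>\<Omega>|lebesgue. u x) = \<nu> A"
    if A: "A \<in> sets lebesgue" for A
  proof -
    let ?h = "\<lambda>x. indicator (A \<inter> \<Omega>) x * u x"
    have hm: "?h \<in> borel_measurable lebesgue" using um A \<Omega>s by measurable
    have hn: "AE x in lebesgue. 0 \<le> ?h x" by (rule AE_I2) (simp add: u_def)
    have "(\<integral>\<^sup>+x. ennreal (?h x) \<partial>lebesgue) = (\<integral>\<^sup>+x. f x * indicator (A \<inter> \<Omega>) x \<partial>lebesgue)"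
    proof (rule nn_integral_cong_AE)
      show "AE x in lebesgue. ennreal (?h x) = f x * indicator (A \<inter> \<Omega>) x"
        using ffin by eventually_elim (auto simp: u_def indicator_def less_top)
    qed
    also have "\<dots> = ennreal (\<nu> (A \<inter> \<Omega>))" using fA[of "A \<inter> \<Omega>"] A \<Omega>s by auto
    also have "\<nu> (A \<inter> \<Omega>) = \<nu> A" unfolding \<nu>_def I_def by (simp add: Int_absorb2)
    finally have nn: "(\<integral>\<^sup>+x. ennreal (?h x) \<partial>lebesgue) = ennreal (\<nu> A)" .
    have hi: "integrable lebesgue ?h" by (rule integrableI_nn_integral_finite[OF hm hn nn])
    have "ennreal (integral\<^sup>L lebesgue ?h) = ennreal (\<nu> A)"
      using nn_integral_eq_integral[OF hi hn] nn by simp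
    moreover have "integral\<^sup>L lebesgue ?h \<ge> 0" using hn by (rule integral_nonneg_AE)
    ultimately have "integral\<^sup>L lebesgue ?h = \<nu> A" using \<nu>bd[OF A] by simp
    then show ?thesis using hi unfolding set_lebesgue_integral_def by simp
  qed
  have ui: "set_integrable lebesgue \<Omega> u" using key[of UNIV] by (simp add: set_integrable_def)
  have pos: "AE x in lebesgue. x \<in> \<Omega> \<longrightarrow> 0 \<le> u x"
    by (rule ae_nonneg_from_sets[OF \<Omega> ui]) (use key \<nu>bd in auto)
  have oi: "set_integrable lebesgue \<Omega> (\<lambda>x. 1 - u x)"
    using ui Linfty_int[OF \<Omega> Linfty_const[OF \<Omega>s, of 1]] by auto
  have le1: "AE x in lebesgue. x \<in> \<Omega> \<longrightarrow> 0 \<le> 1 - u x"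
  proof (rule ae_nonneg_from_sets[OF \<Omega> oi])
    fix A :: "R2 set" assume A: "A \<in> sets lebesgue"
    have s1: "set_integrable lebesgue (A \<inter> \<Omega>) (\<lambda>x. 1::real)"
      using set_integrable_subset[OF Linfty_int[OF \<Omega> Linfty_const[OF \<Omega>s, of 1]]] A \<Omega>s by auto
    have s2: "set_integrable lebesgue (A \<inter> \<Omega>) u" using set_integrable_subset[OF ui] A \<Omega>s by auto
    have "(LINT x:A\<inter>\<Omega>|lebesgue. 1 - u x) = measure lebesgue (A \<inter> \<Omega>) - \<nu> A"
      using set_integral_diff(2)[OF s1 s2] key[OF A] set_integral_const[of "A \<inter> \<Omega>" lebesgue "1::real"]
        fmeasurableD2[OF Im[OF A]] A \<Omega>s by (simp add: infinity_ennreal_def)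
    then show "0 \<le> (LINT x:A\<inter>\<Omega>|lebesgue. 1 - u x)" using \<nu>bd[OF A] by simp
  qed
  have bnd: "AE x in lebesgue. x \<in> \<Omega> \<longrightarrow> 0 \<le> u x \<and> u x \<le> 1" using pos le1 by eventually_elim auto
  have uL: "u \<in> Linfty \<Omega>"
  proof -
    have "set_borel_measurable lebesgue \<Omega> u" using ui unfolding set_integrable_def set_borel_measurable_def by auto
    moreover have "AE x in lebesgue. x \<in> \<Omega> \<longrightarrow> \<bar>u x\<bar> \<le> 1" using bnd by eventually_elim auto
    ultimately show ?thesis unfolding Linfty_def by blast
  qed
  show ?thesis
    using uL bnd lim key unfolding I_def by auto
qed



lemma int_bdd_mult:
  fixes w g :: "R2 \<Rightarrow> real"
  assumes w: "w \<in> Linfty \<Omega>" "AE x in lebesgue. x\<in>\<Omega> \<longrightarrow> \<bar>w x\<bar> \<le> 1" and g: "integrable lebesgue g"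
  shows "integrable lebesgue (\<lambda>x. indicator \<Omega> x * w x * g x)"
proof (rule Bochner_Integration.integrable_bound[OF g])
  have "(\<lambda>x. indicator \<Omega> x * w x) \<in> borel_measurable lebesgue"
    using w(1) unfolding Linfty_def set_borel_measurable_def by simp
  then show "(\<lambda>x. indicator \<Omega> x * w x * g x) \<in> borel_measurable lebesgue" using g by measurable
  show "AE x in lebesgue. norm (indicator \<Omega> x * w x * g x) \<le> norm (g x)"
    using w(2)
  proof (rule AE_mp[OF _ AE_I2], intro impI)
    fix x assume h: "x \<in> \<Omega> \<longrightarrow> \<bar>w x\<bar> \<le> 1"
    show "norm (indicator \<Omega> x * w x * g x) \<le> norm (g x)"
    proof (cases "x \<in> \<Omega>")
      case True
      then have "\<bar>w x\<bar> * \<bar>g x\<bar> \<le> 1 * \<bar>g x\<bar>" using h by (intro mult_right_mono) auto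
      then show ?thesis using True by (simp add: abs_mult)
    qed simp
  qed
qed

lemma diff_bound:
  fixes v s f :: "R2 \<Rightarrow> real"
  assumes w: "v \<in> Linfty \<Omega>" "AE x in lebesgue. x\<in>\<Omega> \<longrightarrow> \<bar>v x\<bar> \<le> 1"
    and s: "integrable lebesgue s" and f: "integrable lebesgue f"
  shows "\<bar>integral\<^sup>L lebesgue (\<lambda>x. indicator \<Omega> x * v x * s x) - integral\<^sup>L lebesgue (\<lambda>x. indicator \<Omega> x * v x * f x)\<bar>
     \<le> integral\<^sup>L lebesgue (\<lambda>x. \<bar>s x - f x\<bar>)"
proof -
  have sf: "integrable lebesgue (\<lambda>x. s x - f x)" using s f by auto
  have "integral\<^sup>L lebesgue (\<lambda>x. indicator \<Omega> x * v x * s x) - integral\<^sup>L lebesgue (\<lambda>x. indicator \<Omega> x * v x * f x)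
     = integral\<^sup>L lebesgue (\<lambda>x. indicator \<Omega> x * v x * (s x - f x))"
    using int_bdd_mult[OF w s] int_bdd_mult[OF w f]
    by (subst Bochner_Integration.integral_diff[symmetric]) (auto simp: algebra_simps)
  also have "\<bar>\<dots>\<bar> \<le> integral\<^sup>L lebesgue (\<lambda>x. norm (indicator \<Omega> x * v x * (s x - f x)))"
    using integral_norm_bound[of lebesgue "\<lambda>x. indicator \<Omega> x * v x * (s x - f x)"] by (simp only: real_norm_def)
  also have "\<dots> \<le> integral\<^sup>L lebesgue (\<lambda>x. \<bar>s x - f x\<bar>)"
  proof (rule integral_mono_AE)
    show "integrable lebesgue (\<lambda>x. norm (indicator \<Omega> x * v x * (s x - f x)))"
      using int_bdd_mult[OF w sf] by auto
    show "integrable lebesgue (\<lambda>x. \<bar>s x - f x\<bar>)" using sf by auto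
    show "AE x in lebesgue. norm (indicator \<Omega> x * v x * (s x - f x)) \<le> \<bar>s x - f x\<bar>"
      using w(2)
    proof (rule AE_mp[OF _ AE_I2], intro impI)
      fix x assume h: "x \<in> \<Omega> \<longrightarrow> \<bar>v x\<bar> \<le> 1"
      show "norm (indicator \<Omega> x * v x * (s x - f x)) \<le> \<bar>s x - f x\<bar>"
      proof (cases "x \<in> \<Omega>")
        case True
        then have "\<bar>v x\<bar> * \<bar>s x - f x\<bar> \<le> 1 * \<bar>s x - f x\<bar>" using h by (intro mult_right_mono) auto
        then show ?thesis using True by (simp add: abs_mult)
      qed simp
    qed
  qed
  finally show ?thesis .
qed

lemma tri3: "\<bar>a - c\<bar> \<le> d \<Longrightarrow> \<bar>b - e\<bar> \<le> d \<Longrightarrow> \<bar>a - b\<bar> < r/3 \<Longrightarrow> d < r/3 \<Longrightarrow> \<bar>c - e\<bar> < (r::real)"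
  by arith

lemma weak_conv:
  fixes w :: "nat \<Rightarrow> R2 \<Rightarrow> real" and u g :: "R2 \<Rightarrow> real"
  assumes \<Omega>: "\<Omega> \<in> lmeasurable"
  and w: "\<And>n. w n \<in> Linfty \<Omega>" "\<And>n. AE x in lebesgue. x\<in>\<Omega> \<longrightarrow> \<bar>w n x\<bar> \<le> 1"
  and u: "u \<in> Linfty \<Omega>" "AE x in lebesgue. x\<in>\<Omega> \<longrightarrow> \<bar>u x\<bar> \<le> 1"
  and sc: "\<And>A. A \<in> sets lebesgue \<Longrightarrow> (\<lambda>n. LINT x:A\<inter>\<Omega>|lebesgue. w n x) \<longlonglongrightarrow> (LINT x:A\<inter>\<Omega>|lebesgue. u x)"
  and g: "integrable lebesgue g"
  shows "(\<lambda>n. integral\<^sup>L lebesgue (\<lambda>x. indicator \<Omega> x * w n x * g x)) \<longlonglongrightarrow> integral\<^sup>L lebesgue (\<lambda>x. indicator \<Omega> x * u x * g x)"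
  using g
proof (induct rule: integrable_induct)
  case (base A c)
  have e: "integral\<^sup>L lebesgue (\<lambda>x. indicator \<Omega> x * v x * (indicator A x *\<^sub>R c)) = c * (LINT x:A\<inter>\<Omega>|lebesgue. v x)" for v :: "R2 \<Rightarrow> real"
  proof -
    have "(\<lambda>x. indicator \<Omega> x * v x * (indicator A x *\<^sub>R c)) = (\<lambda>x. c * (indicator (A\<inter>\<Omega>) x *\<^sub>R v x))"
      by (auto simp: indicator_def)
    then show ?thesis unfolding set_lebesgue_integral_def by simp
  qed
  show ?case unfolding e by (intro tendsto_mult_left sc base)
next
  case (add f g)
  have e: "integral\<^sup>L lebesgue (\<lambda>x. indicator \<Omega> x * v x * (f x + g x)) =
      integral\<^sup>L lebesgue (\<lambda>x. indicator \<Omega> x * v x * f x) + integral\<^sup>L lebesgue (\<lambda>x. indicator \<Omega> x * v x * g x)"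
    if "v \<in> Linfty \<Omega>" "AE x in lebesgue. x\<in>\<Omega> \<longrightarrow> \<bar>v x\<bar> \<le> 1" for v
    using int_bdd_mult[OF that add(1)] int_bdd_mult[OF that add(3)]
    by (subst Bochner_Integration.integral_add[symmetric]) (auto simp: algebra_simps)
  show ?case unfolding e[OF w] e[OF u] by (intro tendsto_add add)
next
  case (lim f s)
  define D where "D i = integral\<^sup>L lebesgue (\<lambda>x. \<bar>s i x - f x\<bar>)" for i
  have D0: "D \<longlonglongrightarrow> 0"
  proof -
    have "(\<lambda>i. integral\<^sup>L lebesgue (\<lambda>x. \<bar>s i x - f x\<bar>)) \<longlonglongrightarrow> integral\<^sup>L lebesgue (\<lambda>x. 0::real)"
    proof -
      have m1: "(\<lambda>x. 0::real) \<in> borel_measurable lebesgue" by simp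
      have m2: "(\<lambda>x. \<bar>s i x - f x\<bar>) \<in> borel_measurable lebesgue" for i using lim(1)[of i] lim(5) by measurable
      have m3: "integrable lebesgue (\<lambda>x. 3 * norm (f x))" using lim(5) by auto
      have m4: "AE x in lebesgue. (\<lambda>i. \<bar>s i x - f x\<bar>) \<longlonglongrightarrow> 0"
      proof (rule AE_I2)
        fix x :: R2 assume "x \<in> space lebesgue"
        then have "(\<lambda>i. s i x - f x) \<longlonglongrightarrow> 0" using lim(3) by (simp add: LIM_zero)
        then show "(\<lambda>i. \<bar>s i x - f x\<bar>) \<longlonglongrightarrow> 0" using tendsto_rabs_zero by blast
      qed
      have m5: "AE x in lebesgue. norm \<bar>s i x - f x\<bar> \<le> 3 * norm (f x)" for i
      proof (rule AE_I2)
        fix x :: R2 assume "x \<in> space lebesgue"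
        then have "norm (s i x) \<le> 2 * norm (f x)" using lim(4) by blast
        then show "norm \<bar>s i x - f x\<bar> \<le> 3 * norm (f x)" by simp
      qed
      show ?thesis using Bochner_Integration.integral_dominated_convergence[OF m1 m2 m3 m4 m5] by simp
    qed
    then show ?thesis unfolding D_def by simp
  qed
  show ?case
  proof (rule LIMSEQ_I)
    fix r :: real assume r: "r > 0"
    obtain i where i: "D i < r/3"
    proof -
      from LIMSEQ_D[OF D0, of "r/3"] r obtain N where "\<forall>n\<ge>N. norm (D n - 0) < r/3" by auto
      then show ?thesis using that[of N] by auto
    qed
    from LIMSEQ_D[OF lim(2)[of i], of "r/3"] r obtain N where
      N: "\<forall>n\<ge>N. norm (integral\<^sup>L lebesgue (\<lambda>x. indicator \<Omega> x * w n x * s i x) - integral\<^sup>L lebesgue (\<lambda>x. indicator \<Omega> x * u x * s i x)) < r/3"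
      by auto
    show "\<exists>N. \<forall>n\<ge>N. norm (integral\<^sup>L lebesgue (\<lambda>x. indicator \<Omega> x * w n x * f x) - integral\<^sup>L lebesgue (\<lambda>x. indicator \<Omega> x * u x * f x)) < r"
    proof (intro exI allI impI)
      fix n assume n: "N \<le> n"
      have 1: "\<bar>integral\<^sup>L lebesgue (\<lambda>x. indicator \<Omega> x * w n x * s i x) - integral\<^sup>L lebesgue (\<lambda>x. indicator \<Omega> x * w n x * f x)\<bar> \<le> D i"
        unfolding D_def by (rule diff_bound[OF w lim(1) lim(5)])
      have 2: "\<bar>integral\<^sup>L lebesgue (\<lambda>x. indicator \<Omega> x * u x * s i x) - integral\<^sup>L lebesgue (\<lambda>x. indicator \<Omega> x * u x * f x)\<bar> \<le> D i"
        unfolding D_def by (rule diff_bound[OF u lim(1) lim(5)])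
      show "norm (integral\<^sup>L lebesgue (\<lambda>x. indicator \<Omega> x * w n x * f x) - integral\<^sup>L lebesgue (\<lambda>x. indicator \<Omega> x * u x * f x)) < r"
      proof -
        have 3: "\<bar>integral\<^sup>L lebesgue (\<lambda>x. indicator \<Omega> x * w n x * s i x) - integral\<^sup>L lebesgue (\<lambda>x. indicator \<Omega> x * u x * s i x)\<bar> < r/3"
          using N n by auto
        show ?thesis using tri3[OF 1 2 3 i] by simp
      qed
    qed
  qed
qed



lemma weak_conv_Linfty:
  fixes w :: "nat \<Rightarrow> R2 \<Rightarrow> real" and u h :: "R2 \<Rightarrow> real"
  assumes \<Omega>: "\<Omega> \<in> lmeasurable"
  and w: "\<And>n. w n \<in> Linfty \<Omega>" "\<And>n. AE x in lebesgue. x\<in>\<Omega> \<longrightarrow> \<bar>w n x\<bar> \<le> 1"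
  and u: "u \<in> Linfty \<Omega>" "AE x in lebesgue. x\<in>\<Omega> \<longrightarrow> \<bar>u x\<bar> \<le> 1"
  and sc: "\<And>A. A \<in> sets lebesgue \<Longrightarrow> (\<lambda>n. LINT x:A\<inter>\<Omega>|lebesgue. w n x) \<longlonglongrightarrow> (LINT x:A\<inter>\<Omega>|lebesgue. u x)"
  and h: "h \<in> Linfty \<Omega>"
  shows "(\<lambda>n. LINT x:\<Omega>|lebesgue. w n x * h x) \<longlonglongrightarrow> (LINT x:\<Omega>|lebesgue. u x * h x)"
proof -
  have g: "integrable lebesgue (\<lambda>x. indicator \<Omega> x * h x)" using Linfty_int[OF \<Omega> h] by (simp add: set_integrable_def)
  have e: "(LINT x:\<Omega>|lebesgue. v x * h x) = integral\<^sup>L lebesgue (\<lambda>x. indicator \<Omega> x * v x * (indicator \<Omega> x * h x))" for v :: "R2 \<Rightarrow> real"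
    unfolding set_lebesgue_integral_def by (intro Bochner_Integration.integral_cong) (auto simp: indicator_def)
  show ?thesis unfolding e by (rule weak_conv[OF \<Omega> w u sc g])
qed

lemma zero_test_field: "(\<lambda>x. 0) \<in> test_fields \<Omega>"
  unfolding test_fields_def by auto

lemma TV_nonneg: "0 \<le> TV \<Omega> u"
proof -
  have "ereal (LINT x:\<Omega>|lebesgue. u x * divergence (\<lambda>x. 0) x) \<le> TV \<Omega> u"
    unfolding TV_def by (rule SUP_upper) (rule zero_test_field)
  moreover have "divergence (\<lambda>x. 0) x = 0" for x :: R2 unfolding divergence_def by simp
  ultimately show ?thesis by (simp add: zero_ereal_def)
qed

lemma div_Linfty:
  assumes g: "g \<in> test_fields \<Omega>" and \<Omega>: "\<Omega> \<in> sets lebesgue" "bounded \<Omega>"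
  shows "divergence g \<in> Linfty \<Omega>"
proof -
  have c: "continuous_on UNIV (divergence g)"
    unfolding divergence_def[abs_def] using g unfolding test_fields_def
    by (intro continuous_on_sum continuous_on_inner continuous_on_const) auto
  then have m: "divergence g \<in> borel_measurable lebesgue"
    by (simp add: borel_measurable_continuous_onI measurable_completion)
  have "compact (divergence g ` closure \<Omega>)"
    using \<Omega>(2) by (intro compact_continuous_image continuous_on_subset[OF c]) (auto simp: compact_closure)
  then obtain B where B: "\<forall>y\<in>divergence g ` closure \<Omega>. norm y \<le> B"
    using compact_imp_bounded bounded_iff by metis
  have "AE x in lebesgue. x \<in> \<Omega> \<longrightarrow> \<bar>divergence g x\<bar> \<le> B"
    using B closure_subset by (intro AE_I2) fastforce
  moreover have "set_borel_measurable lebesgue \<Omega> (divergence g)"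
    unfolding set_borel_measurable_def using m \<Omega>(1) by measurable
  ultimately show ?thesis unfolding Linfty_def by blast
qed

lemma TV_lsc:
  fixes w :: "nat \<Rightarrow> R2 \<Rightarrow> real" and u :: "R2 \<Rightarrow> real"
  assumes \<Omega>: "\<Omega> \<in> lmeasurable" "bounded \<Omega>"
  and w: "\<And>n. w n \<in> Linfty \<Omega>" "\<And>n. AE x in lebesgue. x\<in>\<Omega> \<longrightarrow> \<bar>w n x\<bar> \<le> 1"
  and u: "u \<in> Linfty \<Omega>" "AE x in lebesgue. x\<in>\<Omega> \<longrightarrow> \<bar>u x\<bar> \<le> 1"
  and sc: "\<And>A. A \<in> sets lebesgue \<Longrightarrow> (\<lambda>n. LINT x:A\<inter>\<Omega>|lebesgue. w n x) \<longlonglongrightarrow> (LINT x:A\<inter>\<Omega>|lebesgue. u x)"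
  and T: "\<And>n. TV \<Omega> (w n) \<le> ereal (T n)" "T \<longlonglongrightarrow> t"
  shows "TV \<Omega> u \<le> ereal t"
  unfolding TV_def
proof (rule SUP_least)
  fix g assume g: "g \<in> test_fields \<Omega>"
  have dL: "divergence g \<in> Linfty \<Omega>" using div_Linfty[OF g _ \<Omega>(2)] \<Omega>(1) by (simp add: fmeasurable_def)
  have lim: "(\<lambda>n. LINT x:\<Omega>|lebesgue. w n x * divergence g x) \<longlonglongrightarrow> (LINT x:\<Omega>|lebesgue. u x * divergence g x)"
    by (rule weak_conv_Linfty[OF \<Omega>(1) w u sc dL])
  have le: "(LINT x:\<Omega>|lebesgue. w n x * divergence g x) \<le> T n" for n
  proof -
    have "ereal (LINT x:\<Omega>|lebesgue. w n x * divergence g x) \<le> TV \<Omega> (w n)"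
      unfolding TV_def by (rule SUP_upper[OF g])
    then show ?thesis using T(1)[of n] by (meson ereal_less_eq(3) order_trans)
  qed
  have "(LINT x:\<Omega>|lebesgue. u x * divergence g x) \<le> t"
    by (rule LIMSEQ_le[OF lim T(2)]) (use le in auto)
  then show "ereal (LINT x:\<Omega>|lebesgue. u x * divergence g x) \<le> ereal t" by simp
qed



lemma Linfty_integrand:
  assumes \<Omega>: "\<Omega> \<in> sets lebesgue" and v: "v \<in> Linfty \<Omega>" and p: "p \<in> Linfty \<Omega>"
  shows "(\<lambda>x. (a - p x)^2 * v x + (b - p x)^2 * (1 - v x)) \<in> Linfty \<Omega>"
proof -
  have ap: "(\<lambda>x. a - p x) \<in> Linfty \<Omega>" by (intro Linfty_diff Linfty_const \<Omega> p)
  have bp: "(\<lambda>x. b - p x) \<in> Linfty \<Omega>" by (intro Linfty_diff Linfty_const \<Omega> p)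
  have ov: "(\<lambda>x. 1 - v x) \<in> Linfty \<Omega>" by (intro Linfty_diff Linfty_const \<Omega> v)
  have "(\<lambda>x. (a - p x) * (a - p x) * v x + (b - p x) * (b - p x) * (1 - v x)) \<in> Linfty \<Omega>"
    by (intro Linfty_add Linfty_mult ap bp ov v)
  then show ?thesis by (rule Linfty_cong) (simp add: power2_eq_square)
qed

lemma Df_term_eq:
  assumes \<Omega>: "\<Omega> \<in> lmeasurable" and v: "v \<in> Linfty \<Omega>" and p: "p \<in> Linfty \<Omega>"
  shows "(LINT x:\<Omega>|lebesgue. (a - p x)^2 * v x + (b - p x)^2 * (1 - v x)) =
     (a^2 - b^2) * (LINT x:\<Omega>|lebesgue. v x * 1) - 2*(a-b) * (LINT x:\<Omega>|lebesgue. v x * p x)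
     + (b^2 * measure lebesgue \<Omega> - 2*b*(LINT x:\<Omega>|lebesgue. p x) + (LINT x:\<Omega>|lebesgue. p x * p x))"
proof -
  have \<Omega>s: "\<Omega> \<in> sets lebesgue" using \<Omega> by (simp add: fmeasurable_def)
  have i1: "set_integrable lebesgue \<Omega> (\<lambda>x. (a^2-b^2) * v x)"
    using Linfty_int[OF \<Omega> Linfty_mult[OF Linfty_const[OF \<Omega>s] v]] .
  have i2: "set_integrable lebesgue \<Omega> (\<lambda>x. (- 2*(a-b)) * (v x * p x))"
    using Linfty_int[OF \<Omega> Linfty_mult[OF Linfty_const[OF \<Omega>s] Linfty_mult[OF v p]]] .
  have i3: "set_integrable lebesgue \<Omega> (\<lambda>x. b^2)"
    using Linfty_int[OF \<Omega> Linfty_const[OF \<Omega>s]] .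
  have i4: "set_integrable lebesgue \<Omega> (\<lambda>x. (- 2*b) * p x)"
    using Linfty_int[OF \<Omega> Linfty_mult[OF Linfty_const[OF \<Omega>s] p]] .
  have i5: "set_integrable lebesgue \<Omega> (\<lambda>x. p x * p x)"
    using Linfty_int[OF \<Omega> Linfty_mult[OF p p]] .
  have eq: "(\<lambda>x. (a - p x)^2 * v x + (b - p x)^2 * (1 - v x)) =
     (\<lambda>x. ((a^2-b^2) * v x + (- 2*(a-b)) * (v x * p x)) + ((b^2 + (- 2*b) * p x) + p x * p x))"
    by (auto simp: power2_eq_square algebra_simps)
  have E1: "(LINT x:\<Omega>|lebesgue. (a - p x)^2 * v x + (b - p x)^2 * (1 - v x)) =
     (LINT x:\<Omega>|lebesgue. ((a^2-b^2) * v x + (- 2*(a-b)) * (v x * p x)) + ((b^2 + (- 2*b) * p x) + p x * p x))"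
    by (simp only: eq)
  have E2: "(LINT x:\<Omega>|lebesgue. ((a^2-b^2) * v x + (- 2*(a-b)) * (v x * p x)) + ((b^2 + (- 2*b) * p x) + p x * p x))
      = ((LINT x:\<Omega>|lebesgue. (a^2-b^2) * v x) + (LINT x:\<Omega>|lebesgue. (- 2*(a-b)) * (v x * p x)))
      + (((LINT x:\<Omega>|lebesgue. b^2) + (LINT x:\<Omega>|lebesgue. (- 2*b) * p x)) + (LINT x:\<Omega>|lebesgue. p x * p x))"
    using set_integral_add(2)[OF set_integral_add(1)[OF i1 i2] set_integral_add(1)[OF set_integral_add(1)[OF i3 i4] i5]]
      set_integral_add(2)[OF i1 i2] set_integral_add(2)[OF set_integral_add(1)[OF i3 i4] i5] set_integral_add(2)[OF i3 i4]
    by (simp only:)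
  have c3: "(LINT x:\<Omega>|lebesgue. b^2) = b^2 * measure lebesgue \<Omega>"
  proof -
    have "emeasure lebesgue \<Omega> \<noteq> \<infinity>" using fmeasurableD2[OF \<Omega>] by (metis infinity_ennreal_def)
    then show ?thesis using set_integral_const[OF \<Omega>s, of "b^2"] by simp
  qed
  have c1: "(LINT x:\<Omega>|lebesgue. (a^2-b^2) * v x) = (a^2-b^2) * (LINT x:\<Omega>|lebesgue. v x * 1)" by simp
  have c2: "(LINT x:\<Omega>|lebesgue. (- 2*(a-b)) * (v x * p x)) = (- 2*(a-b)) * (LINT x:\<Omega>|lebesgue. v x * p x)"
    by (rule set_integral_mult_right)
  have c4: "(LINT x:\<Omega>|lebesgue. (- 2*b) * p x) = (- 2*b) * (LINT x:\<Omega>|lebesgue. p x)"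
    by (rule set_integral_mult_right)
  show ?thesis unfolding E1 E2 c1 c2 c3 c4 by (simp add: algebra_simps)
qed

lemma Df_term_nonneg:
  fixes v p :: "R2 \<Rightarrow> real" and a b :: real
  assumes v: "AE x in lebesgue. x \<in> \<Omega> \<longrightarrow> 0 \<le> v x \<and> v x \<le> 1"
  shows "0 \<le> (LINT x:\<Omega>|lebesgue. (a - p x)^2 * v x + (b - p x)^2 * (1 - v x))"
  unfolding set_lebesgue_integral_def
  by (rule Bochner_Integration.integral_nonneg_AE) (use v in \<open>eventually_elim, auto simp: indicator_def\<close>)

lemma clamp_sq:
  fixes M a p :: real
  assumes "\<bar>p\<bar> \<le> M"
  shows "(max (-M) (min M a) - p)^2 \<le> (a - p)^2"
proof (cases "a > M")
  case True
  then have "0 \<le> M - p" "M - p \<le> a - p" using assms by auto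
  then have "(M - p)^2 \<le> (a - p)^2" by (intro power_mono) auto
  moreover have "0 \<le> M" using assms by linarith
  ultimately show ?thesis using True assms by (simp add: max_def min_def)
next
  case False
  show ?thesis
  proof (cases "a < -M")
    case True
    then have "0 \<le> p + M" "p + M \<le> p - a" using assms by auto
    then have "(p + M)^2 \<le> (p - a)^2" by (intro power_mono) auto
    then show ?thesis using True False assms by (simp add: max_def min_def power2_commute)
  next
    case False2: False
    then show ?thesis using False by (simp add: max_def min_def)
  qed
qed

lemma Df_term_clamp:
  assumes \<Omega>: "\<Omega> \<in> lmeasurable" and v: "v \<in> Linfty \<Omega>" "AE x in lebesgue. x \<in> \<Omega> \<longrightarrow> 0 \<le> v x \<and> v x \<le> 1"
    and p: "p \<in> Linfty \<Omega>" "AE x in lebesgue. x \<in> \<Omega> \<longrightarrow> \<bar>p x\<bar> \<le> M"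
  shows "(LINT x:\<Omega>|lebesgue. (max (-M) (min M a) - p x)^2 * v x + (max (-M) (min M b) - p x)^2 * (1 - v x))
    \<le> (LINT x:\<Omega>|lebesgue. (a - p x)^2 * v x + (b - p x)^2 * (1 - v x))"
  unfolding set_lebesgue_integral_def
proof (rule integral_mono_AE)
  have \<Omega>s: "\<Omega> \<in> sets lebesgue" using \<Omega> by (simp add: fmeasurable_def)
  show "integrable lebesgue (\<lambda>x. indicator \<Omega> x *\<^sub>R ((max (-M) (min M a) - p x)^2 * v x + (max (-M) (min M b) - p x)^2 * (1 - v x)))"
    using Linfty_int[OF \<Omega> Linfty_integrand[OF \<Omega>s v(1) p(1)]] by (simp add: set_integrable_def)
  show "integrable lebesgue (\<lambda>x. indicator \<Omega> x *\<^sub>R ((a - p x)^2 * v x + (b - p x)^2 * (1 - v x)))"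
    using Linfty_int[OF \<Omega> Linfty_integrand[OF \<Omega>s v(1) p(1)]] by (simp add: set_integrable_def)
  show "AE x in lebesgue. indicator \<Omega> x *\<^sub>R ((max (-M) (min M a) - p x)^2 * v x + (max (-M) (min M b) - p x)^2 * (1 - v x))
     \<le> indicator \<Omega> x *\<^sub>R ((a - p x)^2 * v x + (b - p x)^2 * (1 - v x))"
    using v(2) p(2)
  proof (eventually_elim)
    case (elim x)
    show ?case
    proof (cases "x \<in> \<Omega>")
      case True
      then have h: "0 \<le> v x" "v x \<le> 1" "\<bar>p x\<bar> \<le> M" using elim by auto
      have "(max (-M) (min M a) - p x)^2 * v x \<le> (a - p x)^2 * v x"
        by (rule mult_right_mono[OF clamp_sq[OF h(3)] h(1)])
      moreover have "(max (-M) (min M b) - p x)^2 * (1 - v x) \<le> (b - p x)^2 * (1 - v x)"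
        using h(2) by (intro mult_right_mono[OF clamp_sq[OF h(3)]]) auto
      ultimately show ?thesis using True by simp
    qed simp
  qed
qed



lemma adm_comp:
  assumes u: "u \<in> admissible \<Omega> K" and k: "k < K"
  shows "u k \<in> Linfty \<Omega>" "AE x in lebesgue. x \<in> \<Omega> \<longrightarrow> 0 \<le> u k x \<and> u k x \<le> 1"
    "0 \<le> TV \<Omega> (u k)" "TV \<Omega> (u k) < \<infinity>"
proof -
  have bv: "u k \<in> BV \<Omega>" using u k unfolding admissible_def by blast
  then have si: "set_integrable lebesgue \<Omega> (u k)" unfolding BV_def by blast
  have ae: "AE x in lebesgue. x \<in> \<Omega> \<longrightarrow> (\<forall>k<K. u k x \<ge> 0) \<and> (\<Sum>k<K. u k x) \<le> 1"
    using u unfolding admissible_def by blast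
  show ae2: "AE x in lebesgue. x \<in> \<Omega> \<longrightarrow> 0 \<le> u k x \<and> u k x \<le> 1"
    using ae
  proof eventually_elim
    case (elim x)
    show ?case
    proof
      assume x: "x \<in> \<Omega>"
      have "u k x \<le> (\<Sum>k<K. u k x)" using elim x k by (intro member_le_sum) auto
      then show "0 \<le> u k x \<and> u k x \<le> 1" using elim x k by auto
    qed
  qed
  have "set_borel_measurable lebesgue \<Omega> (u k)"
    using si unfolding set_integrable_def set_borel_measurable_def by auto
  moreover have "AE x in lebesgue. x \<in> \<Omega> \<longrightarrow> \<bar>u k x\<bar> \<le> 1" using ae2 by eventually_elim auto
  ultimately show "u k \<in> Linfty \<Omega>" unfolding Linfty_def by blast
  show "0 \<le> TV \<Omega> (u k)" by (rule TV_nonneg)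
  show "TV \<Omega> (u k) < \<infinity>" using bv unfolding BV_def by blast
qed

lemma Df_nonneg:
  assumes u: "u \<in> admissible \<Omega> K"
  shows "0 \<le> Df \<Omega> K \<phi> u a b"
  unfolding Df_def by (intro sum_nonneg Df_term_nonneg adm_comp(2)[OF u]) auto

lemma Df_bdd: "u \<in> admissible \<Omega> K \<Longrightarrow> bdd_below {Df \<Omega> K \<phi> u a b |a b. True}"
  using Df_nonneg unfolding bdd_below_def by blast

lemma Df_Inf_le: "u \<in> admissible \<Omega> K \<Longrightarrow> Inf {Df \<Omega> K \<phi> u a b |a b. True} \<le> Df \<Omega> K \<phi> u a b"
  by (rule cInf_lower[OF _ Df_bdd]) auto

lemma Df_Inf_nonneg: "u \<in> admissible \<Omega> K \<Longrightarrow> 0 \<le> Inf {Df \<Omega> K \<phi> u a b |a b. True}"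
  by (rule cInf_greatest) (auto intro: Df_nonneg)

lemma Rf_adm:
  assumes u: "u \<in> admissible \<Omega> K"
  shows "Rf \<Omega> K \<phi> lam u = ereal (lam * (\<Sum>k<K. real_of_ereal (TV \<Omega> (u k))) + Inf {Df \<Omega> K \<phi> u a b |a b. True})"
proof -
  have "TV \<Omega> (u k) = ereal (real_of_ereal (TV \<Omega> (u k)))" if "k < K" for k
    using adm_comp(3,4)[OF u that] by (cases "TV \<Omega> (u k)") auto
  then have "Qf \<Omega> K u = (\<Sum>k<K. ereal (real_of_ereal (TV \<Omega> (u k))))" unfolding Qf_def by (intro sum.cong) auto
  also have "\<dots> = ereal (\<Sum>k<K. real_of_ereal (TV \<Omega> (u k)))" by simp
  finally show ?thesis using u unfolding Rf_def by simp
qed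

lemma adm_zero:
  assumes \<Omega>: "\<Omega> \<in> lmeasurable"
  shows "(\<lambda>k x. 0) \<in> admissible \<Omega> K"
proof -
  have "TV \<Omega> (\<lambda>x. 0) \<le> 0" unfolding TV_def by (rule SUP_least) (simp add: zero_ereal_def)
  then have "(\<lambda>x. 0) \<in> BV \<Omega>" unfolding BV_def set_integrable_def by auto
  then show ?thesis unfolding admissible_def by auto
qed

lemma Df_cont:
  fixes w :: "nat \<Rightarrow> nat \<Rightarrow> R2 \<Rightarrow> real" and u :: "nat \<Rightarrow> R2 \<Rightarrow> real"
  assumes \<Omega>: "\<Omega> \<in> lmeasurable" and \<phi>: "\<And>k. k < K \<Longrightarrow> \<phi> k \<in> Linfty \<Omega>"
  and w: "\<And>n k. k < K \<Longrightarrow> w n k \<in> Linfty \<Omega>" "\<And>n k. k < K \<Longrightarrow> AE x in lebesgue. x\<in>\<Omega> \<longrightarrow> \<bar>w n k x\<bar> \<le> 1"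
  and u: "\<And>k. k < K \<Longrightarrow> u k \<in> Linfty \<Omega>" "\<And>k. k < K \<Longrightarrow> AE x in lebesgue. x\<in>\<Omega> \<longrightarrow> \<bar>u k x\<bar> \<le> 1"
  and sc: "\<And>A k. k < K \<Longrightarrow> A \<in> sets lebesgue \<Longrightarrow> (\<lambda>n. LINT x:A\<inter>\<Omega>|lebesgue. w n k x) \<longlonglongrightarrow> (LINT x:A\<inter>\<Omega>|lebesgue. u k x)"
  and al: "\<And>k. k < K \<Longrightarrow> (\<lambda>n. \<alpha> n k) \<longlonglongrightarrow> a k"
  and bl: "\<And>k. k < K \<Longrightarrow> (\<lambda>n. \<beta> n k) \<longlonglongrightarrow> b k"
  shows "(\<lambda>n. Df \<Omega> K \<phi> (w n) (\<alpha> n) (\<beta> n)) \<longlonglongrightarrow> Df \<Omega> K \<phi> u a b"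
  unfolding Df_def
proof (rule tendsto_sum)
  fix k assume "k \<in> {..<K}"
  then have k: "k < K" by simp
  have \<Omega>s: "\<Omega> \<in> sets lebesgue" using \<Omega> by (simp add: fmeasurable_def)
  have l1: "(\<lambda>n. LINT x:\<Omega>|lebesgue. w n k x * 1) \<longlonglongrightarrow> (LINT x:\<Omega>|lebesgue. u k x * 1)"
    by (rule weak_conv_Linfty[OF \<Omega> w(1)[OF k] w(2)[OF k] u(1)[OF k] u(2)[OF k] sc[OF k] Linfty_const[OF \<Omega>s]])
  have l2: "(\<lambda>n. LINT x:\<Omega>|lebesgue. w n k x * \<phi> k x) \<longlonglongrightarrow> (LINT x:\<Omega>|lebesgue. u k x * \<phi> k x)"
    by (rule weak_conv_Linfty[OF \<Omega> w(1)[OF k] w(2)[OF k] u(1)[OF k] u(2)[OF k] sc[OF k] \<phi>[OF k]])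
  show "(\<lambda>n. LINT x:\<Omega>|lebesgue. (\<alpha> n k - \<phi> k x)\<^sup>2 * w n k x + (\<beta> n k - \<phi> k x)\<^sup>2 * (1 - w n k x))
      \<longlonglongrightarrow> (LINT x:\<Omega>|lebesgue. (a k - \<phi> k x)\<^sup>2 * u k x + (b k - \<phi> k x)\<^sup>2 * (1 - u k x))"
    unfolding Df_term_eq[OF \<Omega> w(1)[OF k] \<phi>[OF k]] Df_term_eq[OF \<Omega> u(1)[OF k] \<phi>[OF k]]
    by (intro tendsto_intros l1 l2 al[OF k] bl[OF k])
qed



lemma L_one_minus_sum:
  assumes \<Omega>: "\<Omega> \<in> lmeasurable" and A: "A \<in> sets lebesgue" and f: "\<And>k. k < K \<Longrightarrow> f k \<in> Linfty \<Omega>"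
  shows "(LINT x:A\<inter>\<Omega>|lebesgue. 1 - (\<Sum>k<K. f k x)) = measure lebesgue (A \<inter> \<Omega>) - (\<Sum>k<K. LINT x:A\<inter>\<Omega>|lebesgue. f k x)"
proof -
  have \<Omega>s: "\<Omega> \<in> sets lebesgue" using \<Omega> by (simp add: fmeasurable_def)
  have AO: "A \<inter> \<Omega> \<in> sets lebesgue" using A \<Omega>s by auto
  have fi: "set_integrable lebesgue (A \<inter> \<Omega>) (f k)" if "k < K" for k
    using set_integrable_subset[OF Linfty_int[OF \<Omega> f[OF that]] AO] by auto
  have s1: "set_integrable lebesgue (A \<inter> \<Omega>) (\<lambda>x. 1::real)"
    using set_integrable_subset[OF Linfty_int[OF \<Omega> Linfty_const[OF \<Omega>s, of 1]] AO] by auto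
  have s2: "set_integrable lebesgue (A \<inter> \<Omega>) (\<lambda>x. \<Sum>k<K. f k x)"
  proof -
    have "(\<lambda>x. \<Sum>k<K. f k x) \<in> Linfty \<Omega>" by (rule Linfty_sum[OF \<Omega>s]) (use f in auto)
    then show ?thesis using set_integrable_subset[OF Linfty_int[OF \<Omega>] AO] by auto
  qed
  have "(LINT x:A\<inter>\<Omega>|lebesgue. (\<Sum>k<K. f k x)) = (\<Sum>k<K. LINT x:A\<inter>\<Omega>|lebesgue. f k x)"
  proof -
    have "(\<lambda>x. indicator (A \<inter> \<Omega>) x * (\<Sum>k<K. f k x)) = (\<lambda>x. \<Sum>k<K. indicator (A \<inter> \<Omega>) x * f k x)"
      by (simp add: sum_distrib_left)
    moreover have "integral\<^sup>L lebesgue (\<lambda>x. \<Sum>k<K. indicator (A \<inter> \<Omega>) x * f k x) = (\<Sum>k<K. integral\<^sup>L lebesgue (\<lambda>x. indicator (A \<inter> \<Omega>) x * f k x))"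
      by (rule Bochner_Integration.integral_sum) (use fi in \<open>auto simp: set_integrable_def\<close>)
    ultimately show ?thesis unfolding set_lebesgue_integral_def by simp
  qed
  moreover have "(LINT x:A\<inter>\<Omega>|lebesgue. 1::real) = measure lebesgue (A \<inter> \<Omega>)"
  proof -
    have "emeasure lebesgue (A \<inter> \<Omega>) \<noteq> \<infinity>"
      using fmeasurableD2[of "A \<inter> \<Omega>"] A \<Omega> by (metis fmeasurable_Int_fmeasurable inf_commute infinity_ennreal_def)
    then show ?thesis using set_integral_const[OF AO, of "1::real"] by simp
  qed
  ultimately show ?thesis using set_integral_diff(2)[OF s1 s2] by simp
qed

lemma adm_sum_nonneg:
  assumes u: "u \<in> admissible \<Omega> K"
  shows "0 \<le> (LINT x:A\<inter>\<Omega>|lebesgue. 1 - (\<Sum>k<K. u k x))"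
proof -
  have ae: "AE x in lebesgue. x \<in> \<Omega> \<longrightarrow> (\<forall>k<K. u k x \<ge> 0) \<and> (\<Sum>k<K. u k x) \<le> 1"
    using u unfolding admissible_def by blast
  show ?thesis unfolding set_lebesgue_integral_def
    by (rule Bochner_Integration.integral_nonneg_AE) (use ae in \<open>eventually_elim, auto simp: indicator_def\<close>)
qed



lemma Rf_nonneg: "0 \<le> Rf \<Omega> K \<phi> lam u" if "lam > 0" for lam
proof (cases "u \<in> admissible \<Omega> K")
  case True
  have "0 \<le> (\<Sum>k<K. real_of_ereal (TV \<Omega> (u k)))"
    by (intro sum_nonneg) (simp add: real_of_ereal_pos TV_nonneg)
  then have "0 \<le> lam * (\<Sum>k<K. real_of_ereal (TV \<Omega> (u k))) + Inf {Df \<Omega> K \<phi> u a b |a b. True}"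
    using Df_Inf_nonneg[OF True] that by simp
  then show ?thesis unfolding Rf_adm[OF True] by simp
next
  case False
  then show ?thesis unfolding Rf_def by simp
qed

lemma exists_min:
  fixes \<Omega> :: "R2 set" and K :: nat and \<phi> :: "nat \<Rightarrow> R2 \<Rightarrow> real" and lam :: real
  assumes dom: "bounded_domain \<Omega>" and \<phi>L: "\<forall>k<K. \<phi> k \<in> Linfty \<Omega>" and lam: "lam > 0"
  shows "\<exists>u. (\<forall>k<K. u k \<in> BV \<Omega>) \<and> (\<forall>v. Rf \<Omega> K \<phi> lam u \<le> Rf \<Omega> K \<phi> lam v)"
proof -
  have \<Omega>m: "\<Omega> \<in> lmeasurable" using dom unfolding bounded_domain_def by (simp add: lmeasurable_open)
  have \<Omega>s: "\<Omega> \<in> sets lebesgue" using \<Omega>m by (simp add: fmeasurable_def)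
  have \<Omega>b: "bounded \<Omega>" using dom unfolding bounded_domain_def by simp
  have "\<forall>k. \<exists>C. k < K \<longrightarrow> (AE x in lebesgue. x \<in> \<Omega> \<longrightarrow> \<bar>\<phi> k x\<bar> \<le> C)"
    using \<phi>L Linfty_bound by blast
  then obtain C where C: "\<And>k. k < K \<Longrightarrow> AE x in lebesgue. x \<in> \<Omega> \<longrightarrow> \<bar>\<phi> k x\<bar> \<le> C k" by metis
  define M where "M = (\<Sum>k<K. \<bar>C k\<bar>)"
  have M0: "0 \<le> M" unfolding M_def by (intro sum_nonneg) auto
  have \<phi>M: "AE x in lebesgue. x \<in> \<Omega> \<longrightarrow> \<bar>\<phi> k x\<bar> \<le> M" if k: "k < K" for k
  proof -
    have h: "\<bar>C k\<bar> \<le> M" unfolding M_def using k by (intro member_le_sum) auto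
    show ?thesis using C[OF k] by eventually_elim (use h in auto)
  qed
  obtain Bs :: "R2 set set" where Bs: "countable Bs" "topological_basis Bs" using ex_countable_basis by blast
  define \<B> where "\<B> = Bfam Bs"
  have c\<B>: "countable \<B>" unfolding \<B>_def Bfam_def using countable_Collect_finite_subset[OF Bs(1)] by simp
  have e\<B>: "{} \<in> \<B>" unfolding \<B>_def Bfam_def by (auto intro!: image_eqI[of _ _ "{}"])
  have s\<B>: "B \<in> sets lebesgue" if "B \<in> \<B>" for B
  proof -
    from that obtain F where F: "finite F" "F \<subseteq> Bs" "B = \<Union>F" unfolding \<B>_def Bfam_def image_iff by blast
    have "open B" using F Bs(2) unfolding topological_basis_def by auto
    then show ?thesis by (simp add: borel_open)
  qed
  define m where "m = Inf (range (Rf \<Omega> K \<phi> lam))"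
  have m_le: "m \<le> Rf \<Omega> K \<phi> lam v" for v unfolding m_def by (rule Inf_lower) simp
  have m_ge: "0 \<le> m" unfolding m_def by (rule Inf_greatest) (use Rf_nonneg[OF lam] in auto)
  have "m < \<infinity>"
  proof -
    have "Rf \<Omega> K \<phi> lam (\<lambda>k x. 0) < \<infinity>" unfolding Rf_adm[OF adm_zero[OF \<Omega>m]] by simp
    then show ?thesis using le_less_trans[OF m_le[of "\<lambda>k x. 0"]] by blast
  qed
  then obtain m0 where m0: "m = ereal m0" using m_ge by (cases m) auto
  define \<epsilon> where "\<epsilon> n = inverse (real (Suc n))" for n
  have \<epsilon>pos: "0 < \<epsilon> n" for n unfolding \<epsilon>_def by simp
  have "\<forall>n. \<exists>v. Rf \<Omega> K \<phi> lam v < ereal (m0 + \<epsilon> n)"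
  proof
    fix n
    have "Inf (range (Rf \<Omega> K \<phi> lam)) < ereal (m0 + \<epsilon> n)" using m0 \<epsilon>pos[of n] unfolding m_def by simp
    then show "\<exists>v. Rf \<Omega> K \<phi> lam v < ereal (m0 + \<epsilon> n)" by (simp add: Inf_less_iff)
  qed
  then obtain v where vR: "\<And>n. Rf \<Omega> K \<phi> lam (v n) < ereal (m0 + \<epsilon> n)" by metis
  have vA: "v n \<in> admissible \<Omega> K" for n
  proof (rule ccontr)
    assume "v n \<notin> admissible \<Omega> K"
    then have "Rf \<Omega> K \<phi> lam (v n) = \<infinity>" unfolding Rf_def by simp
    then show False using vR[of n] by simp
  qed
  define T where "T n k = real_of_ereal (TV \<Omega> (v n k))" for n k
  have vR': "lam * (\<Sum>k<K. T n k) + Inf {Df \<Omega> K \<phi> (v n) a b |a b. True} < m0 + \<epsilon> n" for n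
    using vR[of n] unfolding Rf_adm[OF vA] T_def by simp
  have "\<forall>n. \<exists>a b. Df \<Omega> K \<phi> (v n) a b < Inf {Df \<Omega> K \<phi> (v n) a b |a b. True} + \<epsilon> n"
  proof
    fix n
    have "Inf {Df \<Omega> K \<phi> (v n) a b |a b. True} < Inf {Df \<Omega> K \<phi> (v n) a b |a b. True} + \<epsilon> n" using \<epsilon>pos[of n] by simp
    from cInf_lessD[OF _ this] show "\<exists>a b. Df \<Omega> K \<phi> (v n) a b < Inf {Df \<Omega> K \<phi> (v n) a b |a b. True} + \<epsilon> n"
      by auto
  qed
  then obtain a0 b0 where ab0: "\<And>n. Df \<Omega> K \<phi> (v n) (a0 n) (b0 n) < Inf {Df \<Omega> K \<phi> (v n) a b |a b. True} + \<epsilon> n"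
    by metis
  define cl where "cl c = max (-M) (min M c)" for c
  define \<alpha> where "\<alpha> n k = cl (a0 n k)" for n k
  define \<beta> where "\<beta> n k = cl (b0 n k)" for n k
  have cl_bd: "\<bar>cl c\<bar> \<le> M" for c unfolding cl_def using M0 by auto
  have Dcl: "Df \<Omega> K \<phi> (v n) (\<alpha> n) (\<beta> n) \<le> Df \<Omega> K \<phi> (v n) (a0 n) (b0 n)" for n
    unfolding Df_def \<alpha>_def \<beta>_def cl_def
    by (intro sum_mono Df_term_clamp[OF \<Omega>m] adm_comp[OF vA] \<phi>M) (use \<phi>L in auto)
  have key: "lam * (\<Sum>k<K. T n k) + Df \<Omega> K \<phi> (v n) (\<alpha> n) (\<beta> n) < m0 + 2 * \<epsilon> n" for n
    using vR'[of n] ab0[of n] Dcl[of n] by simp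
  have T0: "0 \<le> T n k" if "k < K" for n k
    unfolding T_def using adm_comp(3)[OF vA that] by (simp add: real_of_ereal_pos)
  have TV_T: "TV \<Omega> (v n k) = ereal (T n k)" if "k < K" for n k
    unfolding T_def using adm_comp(3,4)[OF vA that] by (cases "TV \<Omega> (v n k)") auto
  have Tbd: "T n k \<le> (m0 + 2) / lam" if k: "k < K" for n k
  proof -
    have "T n k \<le> (\<Sum>k<K. T n k)" using k T0 by (intro member_le_sum) auto
    moreover have "0 \<le> Df \<Omega> K \<phi> (v n) (\<alpha> n) (\<beta> n)" by (rule Df_nonneg[OF vA])
    moreover have "\<epsilon> n \<le> 1" unfolding \<epsilon>_def by (simp add: inverse_le_1_iff)
    moreover have "lam * T n k \<le> lam * (\<Sum>k<K. T n k)" using calculation(1) lam by (intro mult_left_mono) auto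
    ultimately have "lam * T n k \<le> m0 + 2" using key[of n] by linarith
    then show ?thesis using lam by (simp add: field_simps mult.commute)
  qed
  define X where "X i n = (case (from_nat i :: nat \<times> nat \<times> nat) of (t, k, j) \<Rightarrow>
      if k < K then (if t = 0 then (LINT x:(from_nat_into \<B> j)\<inter>\<Omega>|lebesgue. v n k x)
        else if t = 1 then \<alpha> n k else if t = 2 then \<beta> n k else T n k) else 0)" for i n
  have Ibd: "\<bar>LINT x:B\<inter>\<Omega>|lebesgue. v n k x\<bar> \<le> measure lebesgue \<Omega>" if "B \<in> sets lebesgue" "k < K" for B n k
  proof -
    have v1: "AE x in lebesgue. x \<in> \<Omega> \<longrightarrow> \<bar>v n k x\<bar> \<le> 1" using adm_comp(2)[OF vA[of n] \<open>k < K\<close>] by eventually_elim auto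
    have "\<bar>(LINT x:B\<inter>\<Omega>|lebesgue. v n k x) - (LINT x:{}\<inter>\<Omega>|lebesgue. v n k x)\<bar> \<le> measure lebesgue (((B - {}) \<union> ({} - B)) \<inter> \<Omega>)"
      by (rule set_int_diff_bound[OF \<Omega>m adm_comp(1)[OF vA \<open>k < K\<close>] v1 that(1)]) simp
    moreover have "measure lebesgue (((B - {}) \<union> ({} - B)) \<inter> \<Omega>) \<le> measure lebesgue \<Omega>"
      using \<Omega>m that(1) by (intro measure_mono_fmeasurable) auto
    ultimately show ?thesis by (simp add: set_lebesgue_integral_def)
  qed
  have Xbd: "\<exists>B. \<forall>n. \<bar>X i n\<bar> \<le> B" for i
  proof (intro exI allI)
    fix n
    obtain t k j where tkj: "(from_nat i :: nat \<times> nat \<times> nat) = (t, k, j)" by (metis prod_cases3)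
    have fB: "from_nat_into \<B> j \<in> \<B>" using e\<B> by (metis empty_iff from_nat_into)
    show "\<bar>X i n\<bar> \<le> measure lebesgue \<Omega> + M + \<bar>(m0 + 2) / lam\<bar>"
    proof (cases "k < K")
      case True
      have "\<bar>T n k\<bar> \<le> \<bar>(m0 + 2) / lam\<bar>" using T0[OF True, of n] Tbd[OF True, of n] by linarith
      moreover have "\<bar>LINT x:(from_nat_into \<B> j)\<inter>\<Omega>|lebesgue. v n k x\<bar> \<le> measure lebesgue \<Omega>"
        using Ibd[OF s\<B>[OF fB] True] .
      moreover have "0 \<le> measure lebesgue \<Omega>" by simp
      ultimately show ?thesis unfolding X_def tkj using True cl_bd[of "a0 n k"] cl_bd[of "b0 n k"] M0
        unfolding \<alpha>_def \<beta>_def by (auto split: if_splits)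
    next
      case False
      then show ?thesis unfolding X_def tkj using M0 by simp
    qed
  qed
  obtain d where d: "strict_mono d" "\<And>i. convergent (\<lambda>n. X i (d n))"
    using diag_subseq[of X, OF Xbd] by blast
  have Xe: "X (to_nat (t::nat, k::nat, j::nat)) n = (if k < K then (if t = 0 then (LINT x:(from_nat_into \<B> j)\<inter>\<Omega>|lebesgue. v n k x)
        else if t = 1 then \<alpha> n k else if t = 2 then \<beta> n k else T n k) else 0)" for t k j n
    unfolding X_def by simp
  have cB: "convergent (\<lambda>n. LINT x:B\<inter>\<Omega>|lebesgue. v (d n) k x)" if B: "B \<in> \<B>" and k: "k < K" for B k
  proof -
    obtain j where "from_nat_into \<B> j = B" using from_nat_into_surj[OF c\<B> B] by blast
    then show ?thesis using d(2)[of "to_nat (0::nat, k, j)"] k unfolding Xe by simp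
  qed
  have ca: "convergent (\<lambda>n. \<alpha> (d n) k)" if "k < K" for k
    using d(2)[of "to_nat (1::nat, k, 0::nat)"] that unfolding Xe by simp
  have cb: "convergent (\<lambda>n. \<beta> (d n) k)" if "k < K" for k
    using d(2)[of "to_nat (2::nat, k, 0::nat)"] that unfolding Xe by simp
  have cT: "convergent (\<lambda>n. T (d n) k)" if "k < K" for k
    using d(2)[of "to_nat (3::nat, k, 0::nat)"] that unfolding Xe by simp
  define w where "w n = v (d n)" for n
  have wL: "w n k \<in> Linfty \<Omega>" "AE x in lebesgue. x \<in> \<Omega> \<longrightarrow> 0 \<le> w n k x \<and> w n k x \<le> 1" if "k < K" for n k
    unfolding w_def using adm_comp(1,2)[OF vA that] by auto
  have wL1: "AE x in lebesgue. x \<in> \<Omega> \<longrightarrow> \<bar>w n k x\<bar> \<le> 1" if "k < K" for n k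
    using wL(2)[OF that, of n] by eventually_elim auto
  have "\<forall>k. \<exists>u. k < K \<longrightarrow> (u \<in> Linfty \<Omega> \<and> (AE x in lebesgue. x\<in>\<Omega> \<longrightarrow> 0 \<le> u x \<and> u x \<le> 1) \<and>
     (\<forall>A\<in>sets lebesgue. (\<lambda>n. LINT x:A\<inter>\<Omega>|lebesgue. w n k x) \<longlonglongrightarrow> (LINT x:A\<inter>\<Omega>|lebesgue. u x)))"
  proof (intro allI)
    fix k show "\<exists>u. k < K \<longrightarrow> (u \<in> Linfty \<Omega> \<and> (AE x in lebesgue. x\<in>\<Omega> \<longrightarrow> 0 \<le> u x \<and> u x \<le> 1) \<and>
     (\<forall>A\<in>sets lebesgue. (\<lambda>n. LINT x:A\<inter>\<Omega>|lebesgue. w n k x) \<longlonglongrightarrow> (LINT x:A\<inter>\<Omega>|lebesgue. u x)))"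
    proof (cases "k < K")
      case k: True
      have cA: "convergent (\<lambda>n. LINT x:A\<inter>\<Omega>|lebesgue. w n k x)" if "A \<in> sets lebesgue" for A
      proof (rule sets_conv[OF \<Omega>m Bs(2,1)])
        show "w n k \<in> Linfty \<Omega>" for n using wL(1)[OF k] .
        show "AE x in lebesgue. x\<in>\<Omega> \<longrightarrow> \<bar>w n k x\<bar> \<le> 1" for n using wL1[OF k] .
        show "convergent (\<lambda>n. LINT x:B\<inter>\<Omega>|lebesgue. w n k x)" if "B \<in> Bfam Bs" for B
          using cB[of B k] that k unfolding w_def \<B>_def by simp
      qed (rule that)
      have "\<exists>u. u \<in> Linfty \<Omega> \<and> (AE x in lebesgue. x\<in>\<Omega> \<longrightarrow> 0 \<le> u x \<and> u x \<le> 1) \<and>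
        (\<forall>A\<in>sets lebesgue. (\<lambda>n. LINT x:A\<inter>\<Omega>|lebesgue. w n k x) \<longlonglongrightarrow> (LINT x:A\<inter>\<Omega>|lebesgue. u x))"
        by (rule limit_density[OF \<Omega>m wL(1)[OF k] wL(2)[OF k] cA])
      then show ?thesis by blast
    qed simp
  qed
  from choice[OF this] obtain u where U: "\<forall>k. k < K \<longrightarrow> (u k \<in> Linfty \<Omega> \<and> (AE x in lebesgue. x\<in>\<Omega> \<longrightarrow> 0 \<le> u k x \<and> u k x \<le> 1) \<and>
     (\<forall>A\<in>sets lebesgue. (\<lambda>n. LINT x:A\<inter>\<Omega>|lebesgue. w n k x) \<longlonglongrightarrow> (LINT x:A\<inter>\<Omega>|lebesgue. u k x)))"
    by (rule exE)
  have u: "\<And>k. k < K \<Longrightarrow> u k \<in> Linfty \<Omega>"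
    "\<And>k. k < K \<Longrightarrow> AE x in lebesgue. x\<in>\<Omega> \<longrightarrow> 0 \<le> u k x \<and> u k x \<le> 1"
    "\<And>k A. k < K \<Longrightarrow> A \<in> sets lebesgue \<Longrightarrow> (\<lambda>n. LINT x:A\<inter>\<Omega>|lebesgue. w n k x) \<longlonglongrightarrow> (LINT x:A\<inter>\<Omega>|lebesgue. u k x)"
    using U by simp_all
  have u1: "AE x in lebesgue. x \<in> \<Omega> \<longrightarrow> \<bar>u k x\<bar> \<le> 1" if "k < K" for k
    using u(2)[OF that] by eventually_elim auto
  define a where "a k = lim (\<lambda>n. \<alpha> (d n) k)" for k
  define b where "b k = lim (\<lambda>n. \<beta> (d n) k)" for k
  define t where "t k = lim (\<lambda>n. T (d n) k)" for k
  have al: "(\<lambda>n. \<alpha> (d n) k) \<longlonglongrightarrow> a k" if "k < K" for k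
    using ca[OF that] unfolding a_def by (simp add: convergent_LIMSEQ_iff)
  have bl: "(\<lambda>n. \<beta> (d n) k) \<longlonglongrightarrow> b k" if "k < K" for k
    using cb[OF that] unfolding b_def by (simp add: convergent_LIMSEQ_iff)
  have tl: "(\<lambda>n. T (d n) k) \<longlonglongrightarrow> t k" if "k < K" for k
    using cT[OF that] unfolding t_def by (simp add: convergent_LIMSEQ_iff)
  have TVu: "TV \<Omega> (u k) \<le> ereal (t k)" if k: "k < K" for k
  proof (rule TV_lsc[OF \<Omega>m \<Omega>b wL(1)[OF k] wL1[OF k] u(1)[OF k] u1[OF k] u(3)[OF k]])
    show "TV \<Omega> (w n k) \<le> ereal (T (d n) k)" for n unfolding w_def using TV_T[OF k] by simp
    show "(\<lambda>n. T (d n) k) \<longlonglongrightarrow> t k" by (rule tl[OF k])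
  qed
  have uBV: "u k \<in> BV \<Omega>" if k: "k < K" for k
  proof -
    have "TV \<Omega> (u k) < \<infinity>" by (rule le_less_trans[OF TVu[OF k]]) simp
    then show ?thesis unfolding BV_def using Linfty_int[OF \<Omega>m u(1)[OF k]] by simp
  qed
  have uSum: "AE x in lebesgue. x \<in> \<Omega> \<longrightarrow> 0 \<le> 1 - (\<Sum>k<K. u k x)"
  proof (rule ae_nonneg_from_sets[OF \<Omega>m])
    have "(\<lambda>x. 1 - (\<Sum>k<K. u k x)) \<in> Linfty \<Omega>"
      by (intro Linfty_diff Linfty_const \<Omega>s Linfty_sum) (use u(1) in auto)
    then show "set_integrable lebesgue \<Omega> (\<lambda>x. 1 - (\<Sum>k<K. u k x))" by (rule Linfty_int[OF \<Omega>m])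
    fix A :: "R2 set" assume A: "A \<in> sets lebesgue"
    have eq1: "(LINT x:A\<inter>\<Omega>|lebesgue. 1 - (\<Sum>k<K. w n k x)) = measure lebesgue (A \<inter> \<Omega>) - (\<Sum>k<K. LINT x:A\<inter>\<Omega>|lebesgue. w n k x)" for n
      by (rule L_one_minus_sum[OF \<Omega>m A]) (rule wL(1))
    have eq2: "(LINT x:A\<inter>\<Omega>|lebesgue. 1 - (\<Sum>k<K. u k x)) = measure lebesgue (A \<inter> \<Omega>) - (\<Sum>k<K. LINT x:A\<inter>\<Omega>|lebesgue. u k x)"
      by (rule L_one_minus_sum[OF \<Omega>m A]) (rule u(1))
    have "(\<lambda>n. LINT x:A\<inter>\<Omega>|lebesgue. 1 - (\<Sum>k<K. w n k x)) \<longlonglongrightarrow> (LINT x:A\<inter>\<Omega>|lebesgue. 1 - (\<Sum>k<K. u k x))"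
      unfolding eq1 eq2
      by (intro tendsto_intros u(3) A) auto
    moreover have "0 \<le> (LINT x:A\<inter>\<Omega>|lebesgue. 1 - (\<Sum>k<K. w n k x))" for n
      unfolding w_def by (rule adm_sum_nonneg[OF vA])
    ultimately show "0 \<le> (LINT x:A\<inter>\<Omega>|lebesgue. 1 - (\<Sum>k<K. u k x))"
      by (intro LIMSEQ_le_const) auto
  qed
  have uA: "u \<in> admissible \<Omega> K"
  proof -
    have "AE x in lebesgue. \<forall>k\<in>{..<K}. x \<in> \<Omega> \<longrightarrow> 0 \<le> u k x"
    proof (rule eventually_ball_finite)
      show "\<forall>k\<in>{..<K}. AE x in lebesgue. x \<in> \<Omega> \<longrightarrow> 0 \<le> u k x"
      proof
        fix k assume "k \<in> {..<K}"
        then show "AE x in lebesgue. x \<in> \<Omega> \<longrightarrow> 0 \<le> u k x" using u(2)[of k] by (auto elim!: eventually_mono)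
      qed
    qed simp
    then have "AE x in lebesgue. x \<in> \<Omega> \<longrightarrow> (\<forall>k<K. u k x \<ge> 0) \<and> (\<Sum>k<K. u k x) \<le> 1"
      using uSum by eventually_elim auto
    then show ?thesis unfolding admissible_def using uBV by auto
  qed
  have lim1: "(\<lambda>n. lam * (\<Sum>k<K. T (d n) k) + Df \<Omega> K \<phi> (w n) (\<alpha> (d n)) (\<beta> (d n)))
     \<longlonglongrightarrow> lam * (\<Sum>k<K. t k) + Df \<Omega> K \<phi> u a b"
  proof (intro tendsto_intros)
    show "(\<lambda>n. T (d n) k) \<longlonglongrightarrow> t k" if "k \<in> {..<K}" for k using tl that by simp
    show "(\<lambda>n. Df \<Omega> K \<phi> (w n) (\<alpha> (d n)) (\<beta> (d n))) \<longlonglongrightarrow> Df \<Omega> K \<phi> u a b"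
      by (rule Df_cont[OF \<Omega>m _ wL(1) wL1 u(1) u1 u(3) al bl]) (use \<phi>L in auto)
  qed
  have lim2: "(\<lambda>n. m0 + 2 * \<epsilon> n) \<longlonglongrightarrow> m0"
  proof -
    have e0: "\<epsilon> \<longlonglongrightarrow> 0" unfolding \<epsilon>_def by (rule LIMSEQ_inverse_real_of_nat)
    show ?thesis using tendsto_add[OF tendsto_const tendsto_mult[OF tendsto_const e0], of m0 2] by simp
  qed
  have le_n: "lam * (\<Sum>k<K. T (d n) k) + Df \<Omega> K \<phi> (w n) (\<alpha> (d n)) (\<beta> (d n)) \<le> m0 + 2 * \<epsilon> n" for n
  proof -
    have "\<epsilon> (d n) \<le> \<epsilon> n" unfolding \<epsilon>_def using seq_suble[OF d(1), of n]
      by (intro le_imp_inverse_le) auto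
    then show ?thesis using key[of "d n"] unfolding w_def by linarith
  qed
  have fin: "lam * (\<Sum>k<K. t k) + Df \<Omega> K \<phi> u a b \<le> m0"
    by (rule LIMSEQ_le[OF lim1 lim2]) (use le_n in auto)
  have "Rf \<Omega> K \<phi> lam u \<le> ereal m0"
  proof -
    have "real_of_ereal (TV \<Omega> (u k)) \<le> t k" if k: "k < K" for k
      using TVu[OF k] TV_nonneg[of \<Omega> "u k"] by (cases "TV \<Omega> (u k)") auto
    then have "lam * (\<Sum>k<K. real_of_ereal (TV \<Omega> (u k))) \<le> lam * (\<Sum>k<K. t k)"
      using lam by (intro mult_left_mono sum_mono) auto
    moreover have "Inf {Df \<Omega> K \<phi> u a b |a b. True} \<le> Df \<Omega> K \<phi> u a b" by (rule Df_Inf_le[OF uA])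
    ultimately show ?thesis unfolding Rf_adm[OF uA] using fin by simp
  qed
  then have "\<forall>v. Rf \<Omega> K \<phi> lam u \<le> Rf \<Omega> K \<phi> lam v" using m_le m0 by (metis order_trans)
  then show ?thesis using uBV by blast
qed



theorem theorem2p1:
  fixes \<Omega> :: "R2 set" and K :: nat and \<phi> :: "nat \<Rightarrow> R2 \<Rightarrow> real" and lam :: real
  assumes "bounded_domain \<Omega>" and "lipschitz_boundary \<Omega>" and "K \<ge> 1"
    and "\<forall>k<K. \<phi> k \<in> Linfty \<Omega>" and "lam > 0"
  shows "(\<exists>u. (\<forall>k<K. u k \<in> BV \<Omega>) \<and> (\<forall>v. Rf \<Omega> K \<phi> lam u \<le> Rf \<Omega> K \<phi> lam v))
       \<and> (\<forall>u a b. (\<forall>v. Rf \<Omega> K \<phi> lam u \<le> Rf \<Omega> K \<phi> lam v)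
              \<longrightarrow> (\<forall>a' b'. Df \<Omega> K \<phi> u a b \<le> Df \<Omega> K \<phi> u a' b')
              \<longrightarrow> (\<forall>v a' b'. Ef \<Omega> K \<phi> lam u a b \<le> Ef \<Omega> K \<phi> lam v a' b'))"
proof
  show "\<exists>u. (\<forall>k<K. u k \<in> BV \<Omega>) \<and> (\<forall>v. Rf \<Omega> K \<phi> lam u \<le> Rf \<Omega> K \<phi> lam v)"
    by (rule exists_min[OF assms(1) assms(4) assms(5)])
  have \<Omega>m: "\<Omega> \<in> lmeasurable" using assms(1) unfolding bounded_domain_def by (simp add: lmeasurable_open)
  show "\<forall>u a b. (\<forall>v. Rf \<Omega> K \<phi> lam u \<le> Rf \<Omega> K \<phi> lam v)
              \<longrightarrow> (\<forall>a' b'. Df \<Omega> K \<phi> u a b \<le> Df \<Omega> K \<phi> u a' b')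
              \<longrightarrow> (\<forall>v a' b'. Ef \<Omega> K \<phi> lam u a b \<le> Ef \<Omega> K \<phi> lam v a' b')"
  proof (intro allI impI)
    fix u a b v a' b'
    assume mn: "\<forall>v. Rf \<Omega> K \<phi> lam u \<le> Rf \<Omega> K \<phi> lam v"
      and dm: "\<forall>a' b'. Df \<Omega> K \<phi> u a b \<le> Df \<Omega> K \<phi> u a' b'"
    have uA: "u \<in> admissible \<Omega> K"
    proof (rule ccontr)
      assume "u \<notin> admissible \<Omega> K"
      then have "Rf \<Omega> K \<phi> lam u = \<infinity>" unfolding Rf_def by simp
      moreover have "Rf \<Omega> K \<phi> lam (\<lambda>k x. 0) < \<infinity>" unfolding Rf_adm[OF adm_zero[OF \<Omega>m]] by simp
      ultimately show False using mn by (metis not_le)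
    qed
    have Inf_eq: "Inf {Df \<Omega> K \<phi> u a b |a b. True} = Df \<Omega> K \<phi> u a b"
      by (rule cInf_eq_minimum) (use dm in auto)
    have Eu: "Ef \<Omega> K \<phi> lam u a b = Rf \<Omega> K \<phi> lam u"
      unfolding Ef_def Rf_def using uA Inf_eq by simp
    show "Ef \<Omega> K \<phi> lam u a b \<le> Ef \<Omega> K \<phi> lam v a' b'"
    proof (cases "v \<in> admissible \<Omega> K")
      case True
      have "Rf \<Omega> K \<phi> lam v \<le> Ef \<Omega> K \<phi> lam v a' b'"
        unfolding Ef_def Rf_def using True Df_Inf_le[OF True, of \<phi> a' b'] by (simp add: add_left_mono)
      then show ?thesis using Eu mn by (metis order_trans)
    next
      case False
      then show ?thesis unfolding Ef_def by simp
    qed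
  qed
qed


end
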